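(* Let $\phi:Z\to[-\infty,+\infty]$ be proper and closed and suppose Assumptions (A1) and (A2) hold for some $\lambda\in\mathbb R$. Then for every $z\in\overline{D\phi}$, $\lim_{\tau\downarrow0}J_\tau z=z$. In particular $\overline{D\phi}=\overline{D(|\partial\phi|)}$.
   Context: $(X,\mathsf d_X)$, $(Y,\mathsf d_Y)$ complete metric spaces; $Z=X\times Y$ with $\mathsf d_Z=(\mathsf d_X^2+\mathsf d_Y^2)^{1/2}$. $D_X\phi=\{x:\phi(x,y)<+\infty\ \forall y\}$, $D_Y\phi=\{y:\phi(x,y)>-\infty\ \forall x\}$, $D\phi=D_X\phi\times D_Y\phi$; proper: $D\phi\ne\emptyset$; closed: for $x\in D_X\phi$, $y\mapsto\phi(x,y)$ upper semicontinuous, for $y\in D_Y\phi$, $x\mapsto\phi(x,y)$ lower semicontinuous. (A1): $\phi=+\infty$ on $(X\setminus D_X\phi)\times D_Y\phi$, $\phi=-\infty$ on $D_X\phi\times(Y\setminus D_Y\phi)$. $\lambda^-=\max\{-\lambda,0\}$, $1/\lambda^-:=+\infty$ if $\lambda^-=0$. $\Phi_\tau(x,y;x',y')=\phi(x',y')+\frac1{2\tau}(\mathsf d_X^2(x',x)-\mathsf d_Y^2(y',y))$. $f$ on $Z$ is $\mu$-convex-concave along curves $\gamma,\sigma$ if for all $t\in[0,1]$: $f(\gamma_t,y)\le(1-t)f(\gamma_0,y)+tf(\gamma_1,y)-\frac\mu2t(1-t)\mathsf d_X^2(\gamma_0,\gamma_1)$ for all $y$ and $f(x,\sigma_t)\ge(1-t)f(x,\sigma_0)+tf(x,\sigma_1)+\frac\mu2t(1-t)\mathsf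 d_Y^2(\sigma_0,\sigma_1)$ for all $x$. (A2) for $\lambda$: for every $(x,y)\in Z$, $(x_0,y_0),(x_1,y_1)\in D\phi$ there are continuous curves $\gamma$ from $x_0$ to $x_1$, $\sigma$ from $y_0$ to $y_1$ such that for all $\tau\in(0,1/\lambda^-)$, $(x',y')\mapsto\Phi_\tau(x,y;x',y')$ is $(\tau^{-1}+\lambda)$-convex-concave along them. For $\tau\in(0,1/\lambda^-)$, $J_\tau z$ is the (unique, existing) saddle point of $z'\mapsto\Phi_\tau(z;z')$. Slope: for $z=(x,y)\in D\phi$ not isolated, $|\partial\phi|(z)=\limsup_{D\phi\ni z'=(x',y')\to z}\frac{\max\{\phi(x,y')-\phi(x',y),0\}}{\mathsf d_Z(z',z)}$; $0$ at isolated points of $D\phi$; $+\infty$ off $D\phi$. $D(|\partial\phi|)=\{z\in D\phi:|\partial\phi|(z)<+\infty\}$. *)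

theory Defs
  imports "HOL-Analysis.Analysis"
begin

text \<open>Z = X x Y carries the product metric dist (x,y) (x',y') = sqrt (dX^2 + dY^2)
  (this is Isabelle's standard metric on product types, see dist_Pair_Pair).\<close>

definition lsc :: "('a::topological_space \<Rightarrow> ereal) \<Rightarrow> bool" where
  "lsc f \<longleftrightarrow> (\<forall>x. f x \<le> Liminf (at x) f)"

definition usc :: "('a::topological_space \<Rightarrow> ereal) \<Rightarrow> bool" where
  "usc f \<longleftrightarrow> (\<forall>x. Limsup (at x) f \<le> f x)"

definition DX :: "('a \<times> 'b \<Rightarrow> ereal) \<Rightarrow> 'a set" where
  "DX \<phi> = {x. \<forall>y. \<phi> (x, y) < \<infinity>}"

definition DY :: "('a \<times> 'b \<Rightarrow> ereal) \<Rightarrow> 'b set" where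
  "DY \<phi> = {y. \<forall>x. \<phi> (x, y) > -\<infinity>}"

definition Dom :: "('a \<times> 'b \<Rightarrow> ereal) \<Rightarrow> ('a \<times> 'b) set" where
  "Dom \<phi> = DX \<phi> \<times> DY \<phi>"

definition proper_sp :: "('a \<times> 'b \<Rightarrow> ereal) \<Rightarrow> bool" where
  "proper_sp \<phi> \<longleftrightarrow> Dom \<phi> \<noteq> {}"

definition closed_sp :: "('a::topological_space \<times> 'b::topological_space \<Rightarrow> ereal) \<Rightarrow> bool" where
  "closed_sp \<phi> \<longleftrightarrow> (\<forall>x\<in>DX \<phi>. usc (\<lambda>y. \<phi> (x, y))) \<and> (\<forall>y\<in>DY \<phi>. lsc (\<lambda>x. \<phi> (x, y)))"

definition A1 :: "('a \<times> 'b \<Rightarrow> ereal) \<Rightarrow> bool" where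
  "A1 \<phi> \<longleftrightarrow> (\<forall>x y. x \<notin> DX \<phi> \<and> y \<in> DY \<phi> \<longrightarrow> \<phi> (x, y) = \<infinity>)
              \<and> (\<forall>x y. x \<in> DX \<phi> \<and> y \<notin> DY \<phi> \<longrightarrow> \<phi> (x, y) = -\<infinity>)"

text \<open>lambda^- = max (-lambda) 0; the admissible step sizes are tau in (0, 1/lambda^-),
  with 1/lambda^- = +infinity when lambda^- = 0.\<close>
definition neg_part :: "real \<Rightarrow> real" where
  "neg_part l = max (- l) 0"

definition adm_tau :: "real \<Rightarrow> real set" where
  "adm_tau l = {\<tau>. 0 < \<tau> \<and> (neg_part l = 0 \<or> \<tau> < 1 / neg_part l)}"

definition Phi :: "('a::metric_space \<times> 'b::metric_space \<Rightarrow> ereal) \<Rightarrow> real \<Rightarrow> 'a \<times> 'b \<Rightarrow> 'a \<times> 'b \<Rightarrow> ereal" where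
  "Phi \<phi> \<tau> z z' = \<phi> z' + ereal ((dist (fst z') (fst z))\<^sup>2 / (2 * \<tau>) - (dist (snd z') (snd z))\<^sup>2 / (2 * \<tau>))"

definition convex_concave_along ::
  "('a::metric_space \<times> 'b::metric_space \<Rightarrow> ereal) \<Rightarrow> real \<Rightarrow> (real \<Rightarrow> 'a) \<Rightarrow> (real \<Rightarrow> 'b) \<Rightarrow> bool" where
  "convex_concave_along f \<mu> \<gamma> \<sigma> \<longleftrightarrow>
     (\<forall>t\<in>{0..1}.
        (\<forall>y. f (\<gamma> t, y) \<le> ereal (1 - t) * f (\<gamma> 0, y) + ereal t * f (\<gamma> 1, y)
                 - ereal (\<mu> / 2 * t * (1 - t) * (dist (\<gamma> 0) (\<gamma> 1))\<^sup>2)) \<and>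
        (\<forall>x. f (x, \<sigma> t) \<ge> ereal (1 - t) * f (x, \<sigma> 0) + ereal t * f (x, \<sigma> 1)
                 + ereal (\<mu> / 2 * t * (1 - t) * (dist (\<sigma> 0) (\<sigma> 1))\<^sup>2)))"

definition A2 :: "('a::metric_space \<times> 'b::metric_space \<Rightarrow> ereal) \<Rightarrow> real \<Rightarrow> bool" where
  "A2 \<phi> l \<longleftrightarrow> (\<forall>z x0 y0 x1 y1. (x0, y0) \<in> Dom \<phi> \<longrightarrow> (x1, y1) \<in> Dom \<phi> \<longrightarrow>
      (\<exists>\<gamma> \<sigma>. continuous_on {0..1} \<gamma> \<and> \<gamma> 0 = x0 \<and> \<gamma> 1 = x1 \<and>
              continuous_on {0..1} \<sigma> \<and> \<sigma> 0 = y0 \<and> \<sigma> 1 = y1 \<and>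
              (\<forall>\<tau>\<in>adm_tau l. convex_concave_along (Phi \<phi> \<tau> z) (1 / \<tau> + l) \<gamma> \<sigma>)))"

definition is_saddle :: "('a \<times> 'b \<Rightarrow> ereal) \<Rightarrow> 'a \<times> 'b \<Rightarrow> bool" where
  "is_saddle f p \<longleftrightarrow> (\<forall>x' y'. f (fst p, y') \<le> f p \<and> f p \<le> f (x', snd p))"

definition J :: "('a::metric_space \<times> 'b::metric_space \<Rightarrow> ereal) \<Rightarrow> real \<Rightarrow> 'a \<times> 'b \<Rightarrow> 'a \<times> 'b" where
  "J \<phi> \<tau> z = (THE p. is_saddle (Phi \<phi> \<tau> z) p)"

definition slope :: "('a::metric_space \<times> 'b::metric_space \<Rightarrow> ereal) \<Rightarrow> 'a \<times> 'b \<Rightarrow> ereal" where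
  "slope \<phi> z =
    (if z \<notin> Dom \<phi> then \<infinity>
     else if at z within Dom \<phi> = bot then 0
     else Limsup (at z within Dom \<phi>)
       (\<lambda>z'. max (\<phi> (fst z, snd z') - \<phi> (fst z', snd z)) 0 / ereal (dist z' z)))"

definition Dom_slope :: "('a::metric_space \<times> 'b::metric_space \<Rightarrow> ereal) \<Rightarrow> ('a \<times> 'b) set" where
  "Dom_slope \<phi> = {z \<in> Dom \<phi>. slope \<phi> z < \<infinity>}"

end

theory Submission
  imports Defs "HOL-Analysis.Analysis"
begin
lemma lim_ineq:
  fixes a b K :: real
  assumes "\<And>t. 0 < t \<Longrightarrow> t \<le> 1 \<Longrightarrow> a \<le> b + t * K"
  shows "a \<le> b"
proof (rule ccontr)
  assume "\<not> a \<le> b"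
  show False
  proof (cases "K \<le> 0")
    case True
    then show False using assms[of 1] \<open>\<not> a \<le> b\<close> by auto
  next
    case False
    define t where "t = min 1 ((a - b) / (2 * K))"
    have t0: "0 < t" "t \<le> 1" using False \<open>\<not> a \<le> b\<close> by (auto simp: t_def)
    have "t * K \<le> (a - b) / (2 * K) * K" using False unfolding t_def
      by (intro mult_right_mono) auto
    also have "\<dots> = (a - b)/2" using False by (auto simp: field_simps)
    finally show False using assms[OF t0] \<open>\<not> a \<le> b\<close> by auto
  qed
qed

lemma dist_sq_tri:
  fixes a b c :: "'a::metric_space"
  shows "(dist a c)\<^sup>2 \<le> 2 * (dist a b)\<^sup>2 + 2 * (dist b c)\<^sup>2"
proof -
  have "dist a c \<le> dist a b + dist b c" by (rule dist_triangle)
  hence "(dist a c)\<^sup>2 \<le> (dist a b + dist b c)\<^sup>2" by (simp add: power_mono)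
  also have "\<dots> \<le> 2 * (dist a b)\<^sup>2 + 2 * (dist b c)\<^sup>2"
  proof -
    have "0 \<le> (dist a b - dist b c)\<^sup>2" by simp
    thus ?thesis unfolding power2_sum power2_diff by linarith
  qed
  finally show ?thesis .
qed

lemma dist_sq_diff:
  fixes u v w :: "'a::metric_space"
  shows "(dist u w)\<^sup>2 - (dist v w)\<^sup>2 \<le> dist u v * (2 * dist v w + dist u v)"
proof -
  have h: "dist u w \<le> dist u v + dist v w" by (rule dist_triangle)
  have "(dist u w)\<^sup>2 \<le> (dist u v + dist v w)\<^sup>2"
    using h by (simp add: power_mono)
  thus ?thesis by (simp add: power2_eq_square algebra_simps)
qed

lemma ereal_ge_eps:
  assumes "\<And>e. 0 < e \<Longrightarrow> ereal (R - e) \<le> a"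
  shows "ereal R \<le> a"
proof (cases a)
  case (real r)
  have "R \<le> r"
  proof (rule ccontr)
    assume "\<not> R \<le> r"
    hence "0 < (R - r)/2" by simp
    from assms[OF this] real have "R - (R - r)/2 \<le> r" by simp
    thus False using \<open>\<not> R \<le> r\<close> by (simp add: field_simps)
  qed
  then show ?thesis using real by simp
next
  case PInf then show ?thesis by simp
next
  case MInf then show ?thesis using assms[of 1] by simp
qed

lemma ereal_le_eps:
  assumes "\<And>e. 0 < e \<Longrightarrow> a \<le> ereal (R + e)"
  shows "a \<le> ereal R"
proof (rule ereal_le_epsilon2)
  fix e :: real assume "0 < e"
  from assms[OF this] show "a \<le> ereal R + ereal e" by simp
qed

lemma cauchy_from_sq:
  fixes f :: "nat \<Rightarrow> 'a::metric_space"
  assumes "\<And>m n. (dist (f m) (f n))\<^sup>2 \<le> C * (1/(m+1) + 1/(n+1))" and "C \<ge> 0"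
  shows "Cauchy f"
proof (rule metric_CauchyI)
  fix e :: real assume e: "0 < e"
  obtain M :: nat where M: "2 * C / e\<^sup>2 < M" using reals_Archimedean2 by blast
  have "\<forall>m\<ge>M. \<forall>n\<ge>M. dist (f m) (f n) < e"
  proof (intro allI impI)
    fix m n assume mn: "M \<le> m" "M \<le> n"
    have "1/(real m+1) \<le> 1/(real M+1)" "1/(real n+1) \<le> 1/(real M+1)"
      using mn by (auto simp: frac_le)
    hence s: "1/(real m+1) + 1/(real n+1) \<le> 2/(real M+1)" by linarith
    have "C * (1/(real m+1) + 1/(real n+1)) \<le> C * (2/(real M+1))"
      using mult_left_mono[OF s \<open>C \<ge> 0\<close>] by (simp add: ac_simps)
    also have "\<dots> < e\<^sup>2"
    proof -
      have "2 * C < real M * e\<^sup>2" using M e by (simp add: field_simps)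
      moreover have "0 \<le> e\<^sup>2" by simp
      ultimately have "2 * C < (real M + 1) * e\<^sup>2" unfolding distrib_right mult_1 by linarith
      thus ?thesis by (simp add: field_simps)
    qed
    finally have "(dist (f m) (f n))\<^sup>2 < e\<^sup>2" using assms(1)[of m n] by linarith
    thus "dist (f m) (f n) < e" using e by (simp add: power_less_imp_less_base)
  qed
  thus "\<exists>M. \<forall>m\<ge>M. \<forall>n\<ge>M. dist (f m) (f n) < e" by blast
qed

lemma lsc_seq:
  fixes f :: "'a::metric_space \<Rightarrow> ereal"
  assumes "lsc f" "X \<longlonglongrightarrow> x" "eventually (\<lambda>n. f (X n) \<le> c) sequentially"
  shows "f x \<le> c"
proof (rule ccontr)
  assume "\<not> f x \<le> c"
  hence "c < Liminf (at x) f" using assms(1) unfolding lsc_def by (meson not_le order_less_le_trans)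
  hence "eventually (\<lambda>u. c < f u) (at x)" by (rule less_LiminfD)
  then obtain d where d: "d > 0" "\<And>u. u \<noteq> x \<Longrightarrow> dist u x < d \<Longrightarrow> c < f u"
    unfolding eventually_at by auto
  have "eventually (\<lambda>n. dist (X n) x < d) sequentially"
    using assms(2) d(1) by (simp add: tendsto_iff)
  with assms(3) have "eventually (\<lambda>n. dist (X n) x < d \<and> f (X n) \<le> c) sequentially"
    by (simp add: eventually_conj)
  then obtain N where "\<forall>n\<ge>N. dist (X n) x < d \<and> f (X n) \<le> c" unfolding eventually_sequentially by blast
  then obtain n where "dist (X n) x < d" "f (X n) \<le> c" by blast
  moreover have "X n \<noteq> x" using \<open>f (X n) \<le> c\<close> \<open>\<not> f x \<le> c\<close> by auto
  ultimately show False using d(2) by fastforce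
qed

lemma usc_seq:
  fixes f :: "'a::metric_space \<Rightarrow> ereal"
  assumes "usc f" "X \<longlonglongrightarrow> x" "eventually (\<lambda>n. c \<le> f (X n)) sequentially"
  shows "c \<le> f x"
proof (rule ccontr)
  assume "\<not> c \<le> f x"
  hence "Limsup (at x) f < c" using assms(1) unfolding usc_def by (meson not_le order_le_less_trans)
  hence "eventually (\<lambda>u. f u < c) (at x)" by (rule Limsup_lessD)
  then obtain d where d: "d > 0" "\<And>u. u \<noteq> x \<Longrightarrow> dist u x < d \<Longrightarrow> f u < c"
    unfolding eventually_at by auto
  have "eventually (\<lambda>n. dist (X n) x < d) sequentially"
    using assms(2) d(1) by (simp add: tendsto_iff)
  with assms(3) have "eventually (\<lambda>n. dist (X n) x < d \<and> c \<le> f (X n)) sequentially"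
    by (simp add: eventually_conj)
  then obtain N where "\<forall>n\<ge>N. dist (X n) x < d \<and> c \<le> f (X n)" unfolding eventually_sequentially by blast
  then obtain n where "dist (X n) x < d" "c \<le> f (X n)" by blast
  moreover have "X n \<noteq> x" using \<open>c \<le> f (X n)\<close> \<open>\<not> c \<le> f x\<close> by auto
  ultimately show False using d(2) by fastforce
qed

lemma lsc_ball:
  fixes f :: "'a::metric_space \<Rightarrow> ereal"
  assumes "lsc f" "c < f x"
  obtains r where "r > 0" "\<And>u. dist u x < r \<Longrightarrow> c < f u"
proof -
  have "c < Liminf (at x) f" using assms unfolding lsc_def by (meson order_less_le_trans)
  hence "eventually (\<lambda>u. c < f u) (at x)" by (rule less_LiminfD)
  then obtain d where d: "d > 0" "\<And>u. u \<noteq> x \<Longrightarrow> dist u x < d \<Longrightarrow> c < f u"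
    unfolding eventually_at by auto
  show ?thesis using d assms(2) that[of d] by metis
qed

lemma usc_ball:
  fixes f :: "'a::metric_space \<Rightarrow> ereal"
  assumes "usc f" "f x < c"
  obtains r where "r > 0" "\<And>u. dist u x < r \<Longrightarrow> f u < c"
proof -
  have "Limsup (at x) f < c" using assms unfolding usc_def by (meson order_le_less_trans)
  hence "eventually (\<lambda>u. f u < c) (at x)" by (rule Limsup_lessD)
  then obtain d where d: "d > 0" "\<And>u. u \<noteq> x \<Longrightarrow> dist u x < d \<Longrightarrow> f u < c"
    unfolding eventually_at by auto
  show ?thesis using d assms(2) that[of d] by metis
qed

locale sp =
  fixes \<phi> :: "'a::complete_space \<times> 'b::complete_space \<Rightarrow> ereal" and l :: real
  assumes proper: "proper_sp \<phi>" and closed: "closed_sp \<phi>" and a1: "A1 \<phi>" and a2: "A2 \<phi> l"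
begin

definition pr :: "'a \<Rightarrow> 'b \<Rightarrow> real" where "pr x y = real_of_ereal (\<phi> (x, y))"

definition FF :: "real \<Rightarrow> 'a \<times> 'b \<Rightarrow> 'a \<Rightarrow> 'b \<Rightarrow> real" where
  "FF \<tau> z x y = pr x y + (dist x (fst z))\<^sup>2 / (2 * \<tau>) - (dist y (snd z))\<^sup>2 / (2 * \<tau>)"

lemma fin: "x \<in> DX \<phi> \<Longrightarrow> y \<in> DY \<phi> \<Longrightarrow> \<phi> (x, y) = ereal (pr x y)"
  unfolding DX_def DY_def pr_def by (cases "\<phi> (x, y)") auto

lemma A1x: "x \<notin> DX \<phi> \<Longrightarrow> y \<in> DY \<phi> \<Longrightarrow> \<phi> (x, y) = \<infinity>"
  using a1 unfolding A1_def by blast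

lemma A1y: "x \<in> DX \<phi> \<Longrightarrow> y \<notin> DY \<phi> \<Longrightarrow> \<phi> (x, y) = -\<infinity>"
  using a1 unfolding A1_def by blast

lemma Phi_eq: "x \<in> DX \<phi> \<Longrightarrow> y \<in> DY \<phi> \<Longrightarrow> Phi \<phi> \<tau> z (x, y) = ereal (FF \<tau> z x y)"
  by (simp add: Phi_def fin FF_def)

lemma Phi_inf: "x \<notin> DX \<phi> \<Longrightarrow> y \<in> DY \<phi> \<Longrightarrow> Phi \<phi> \<tau> z (x, y) = \<infinity>"
  by (simp add: Phi_def A1x)

lemma Phi_minf: "x \<in> DX \<phi> \<Longrightarrow> y \<notin> DY \<phi> \<Longrightarrow> Phi \<phi> \<tau> z (x, y) = -\<infinity>"
  by (simp add: Phi_def A1y)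

lemma Dom_ne: obtains x0 y0 where "x0 \<in> DX \<phi>" "y0 \<in> DY \<phi>"
  using proper unfolding proper_sp_def Dom_def by blast

lemma lsc_x: "y \<in> DY \<phi> \<Longrightarrow> lsc (\<lambda>x. \<phi> (x, y))"
  using closed unfolding closed_sp_def by blast

lemma usc_y: "x \<in> DX \<phi> \<Longrightarrow> usc (\<lambda>y. \<phi> (x, y))"
  using closed unfolding closed_sp_def by blast

lemma mu_pos: "\<tau> \<in> adm_tau l \<Longrightarrow> 0 < 1/\<tau> + l"
proof -
  assume t: "\<tau> \<in> adm_tau l"
  hence t0: "0 < \<tau>" by (simp add: adm_tau_def)
  show ?thesis
  proof (cases "l \<ge> 0")
    case True
    have "0 < 1/\<tau>" using t0 by simp
    then show ?thesis using True by linarith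
  next
    case False
    hence np: "neg_part l = - l" "neg_part l \<noteq> 0" by (auto simp: neg_part_def)
    hence "\<tau> < 1 / (- l)" using t by (auto simp: adm_tau_def)
    hence "\<tau> * (-l) < 1" using False by (simp add: field_simps)
    hence "-l < 1/\<tau>" using t0 by (simp add: field_simps)
    thus ?thesis by simp
  qed
qed

lemma adm_small: "0 < \<tau> \<Longrightarrow> \<tau> < 1 / (\<bar>l\<bar> + 1) \<Longrightarrow> \<tau> \<in> adm_tau l"
proof -
  assume t: "0 < \<tau>" "\<tau> < 1 / (\<bar>l\<bar> + 1)"
  have "neg_part l \<le> \<bar>l\<bar>" by (simp add: neg_part_def)
  show ?thesis
  proof (cases "neg_part l = 0")
    case True then show ?thesis using t by (simp add: adm_tau_def)
  next
    case False
    hence "neg_part l > 0" by (simp add: neg_part_def)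
    hence "1 / (\<bar>l\<bar> + 1) \<le> 1 / neg_part l" using \<open>neg_part l \<le> \<bar>l\<bar>\<close>
      by (intro divide_left_mono) auto
    then show ?thesis using t by (simp add: adm_tau_def)
  qed
qed

lemma cvx:
  assumes x0: "x0 \<in> DX \<phi>" and x1: "x1 \<in> DX \<phi>" and y: "y \<in> DY \<phi>" and tau: "\<tau> \<in> adm_tau l"
  obtains \<gamma> where "continuous_on {0..1} \<gamma>" "\<gamma> 0 = x0" "\<gamma> 1 = x1"
    "\<And>t. t \<in> {0..1} \<Longrightarrow> \<gamma> t \<in> DX \<phi> \<and> FF \<tau> z (\<gamma> t) y \<le> (1-t) * FF \<tau> z x0 y + t * FF \<tau> z x1 y
          - (1/\<tau>+l)/2*t*(1-t)*(dist x0 x1)\<^sup>2"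
proof -
  have d: "(x0, y) \<in> Dom \<phi>" "(x1, y) \<in> Dom \<phi>" using x0 x1 y by (auto simp: Dom_def)
  from a2[unfolded A2_def, rule_format, OF d, of z] obtain \<gamma> \<sigma> where
    g: "continuous_on {0..1} \<gamma>" "\<gamma> 0 = x0" "\<gamma> 1 = x1" and
    cc: "\<forall>\<tau>\<in>adm_tau l. convex_concave_along (Phi \<phi> \<tau> z) (1/\<tau>+l) \<gamma> \<sigma>" by blast
  have key: "\<gamma> t \<in> DX \<phi> \<and> FF \<tau> z (\<gamma> t) y \<le> (1-t) * FF \<tau> z x0 y + t * FF \<tau> z x1 y
          - (1/\<tau>+l)/2*t*(1-t)*(dist x0 x1)\<^sup>2" if t: "t \<in> {0..1}" for t
  proof -
    from cc tau t have ineq: "Phi \<phi> \<tau> z (\<gamma> t, y) \<le> ereal (1-t) * Phi \<phi> \<tau> z (\<gamma> 0, y) + ereal t * Phi \<phi> \<tau> z (\<gamma> 1, y)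
       - ereal ((1/\<tau>+l)/2*t*(1-t)*(dist (\<gamma> 0) (\<gamma> 1))\<^sup>2)"
      unfolding convex_concave_along_def by blast
    hence ineq': "Phi \<phi> \<tau> z (\<gamma> t, y) \<le> ereal ((1-t) * FF \<tau> z x0 y + t * FF \<tau> z x1 y
          - (1/\<tau>+l)/2*t*(1-t)*(dist x0 x1)\<^sup>2)"
      using g by (simp add: Phi_eq x0 x1 y)
    have gt: "\<gamma> t \<in> DX \<phi>"
    proof (rule ccontr)
      assume "\<gamma> t \<notin> DX \<phi>"
      hence "Phi \<phi> \<tau> z (\<gamma> t, y) = \<infinity>" using Phi_inf y by blast
      thus False using ineq' by simp
    qed
    thus ?thesis using ineq' Phi_eq[OF gt y] by simp
  qed
  show thesis using that g key by blast
qed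

lemma ccv:
  assumes y0: "y0 \<in> DY \<phi>" and y1: "y1 \<in> DY \<phi>" and x: "x \<in> DX \<phi>" and tau: "\<tau> \<in> adm_tau l"
  obtains \<sigma> where "continuous_on {0..1} \<sigma>" "\<sigma> 0 = y0" "\<sigma> 1 = y1"
    "\<And>t. t \<in> {0..1} \<Longrightarrow> \<sigma> t \<in> DY \<phi> \<and> (\<forall>x'\<in>DX \<phi>. (1-t) * FF \<tau> z x' y0 + t * FF \<tau> z x' y1
          + (1/\<tau>+l)/2*t*(1-t)*(dist y0 y1)\<^sup>2 \<le> FF \<tau> z x' (\<sigma> t))"
proof -
  have d: "(x, y0) \<in> Dom \<phi>" "(x, y1) \<in> Dom \<phi>" using y0 y1 x by (auto simp: Dom_def)
  from a2[unfolded A2_def, rule_format, OF d, of z] obtain \<gamma> \<sigma> where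
    g: "continuous_on {0..1} \<sigma>" "\<sigma> 0 = y0" "\<sigma> 1 = y1" and
    cc: "\<forall>\<tau>\<in>adm_tau l. convex_concave_along (Phi \<phi> \<tau> z) (1/\<tau>+l) \<gamma> \<sigma>" by blast
  have key: "\<sigma> t \<in> DY \<phi> \<and> (\<forall>x'\<in>DX \<phi>. (1-t) * FF \<tau> z x' y0 + t * FF \<tau> z x' y1
          + (1/\<tau>+l)/2*t*(1-t)*(dist y0 y1)\<^sup>2 \<le> FF \<tau> z x' (\<sigma> t))" if t: "t \<in> {0..1}" for t
  proof -
    from cc tau t have ineq: "\<forall>x'. ereal (1-t) * Phi \<phi> \<tau> z (x', \<sigma> 0) + ereal t * Phi \<phi> \<tau> z (x', \<sigma> 1)
       + ereal ((1/\<tau>+l)/2*t*(1-t)*(dist (\<sigma> 0) (\<sigma> 1))\<^sup>2) \<le> Phi \<phi> \<tau> z (x', \<sigma> t)"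
      unfolding convex_concave_along_def by blast
    have ineq': "ereal ((1-t) * FF \<tau> z x' y0 + t * FF \<tau> z x' y1
          + (1/\<tau>+l)/2*t*(1-t)*(dist y0 y1)\<^sup>2) \<le> Phi \<phi> \<tau> z (x', \<sigma> t)" if x': "x' \<in> DX \<phi>" for x'
      using ineq[rule_format, of x'] g by (simp add: Phi_eq x' y0 y1)
    have gt: "\<sigma> t \<in> DY \<phi>"
    proof (rule ccontr)
      assume "\<sigma> t \<notin> DY \<phi>"
      hence "Phi \<phi> \<tau> z (x, \<sigma> t) = -\<infinity>" using Phi_minf x by blast
      thus False using ineq'[OF x] by simp
    qed
    thus ?thesis using ineq' Phi_eq[OF _ gt] by simp
  qed
  show thesis using that g key by blast
qed

end

context sp begin

lemma FF_self_y: "FF \<tau> (x1, y) u y = pr u y + (dist u x1)\<^sup>2 / (2*\<tau>)"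
  by (simp add: FF_def)

lemma FF_self_x: "FF \<tau> (x, y1) x u = pr x u - (dist u y1)\<^sup>2 / (2*\<tau>)"
  by (simp add: FF_def)

lemma small_tau:
  assumes "r > 0"
  obtains \<tau> where "\<tau> \<in> adm_tau l" "0 < \<tau>" "1 \<le> (r/2)\<^sup>2 / (2*\<tau>)"
proof -
  define \<tau> where "\<tau> = min (r\<^sup>2/8) (1/(2*(\<bar>l\<bar>+1)))"
  have t0: "0 < \<tau>" using assms by (simp add: \<tau>_def)
  have "\<tau> \<le> 1/(2*(\<bar>l\<bar>+1))" by (simp add: \<tau>_def)
  also have "\<dots> < 1/(\<bar>l\<bar>+1)" by (simp add: field_simps)
  finally have "\<tau> \<in> adm_tau l" using adm_small t0 by blast
  moreover have "1 \<le> (r/2)\<^sup>2 / (2*\<tau>)"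
  proof -
    have "\<tau> \<le> r\<^sup>2/8" by (simp add: \<tau>_def)
    hence "2*\<tau> \<le> (r/2)\<^sup>2" by (simp add: power_divide)
    thus ?thesis using t0 by (simp add: field_simps)
  qed
  ultimately show thesis using that t0 by blast
qed

lemma LB:
  assumes y: "y \<in> DY \<phi>" and x1: "x1 \<in> DX \<phi>"
  obtains c B where "B \<ge> 0" "\<And>x. x \<in> DX \<phi> \<Longrightarrow> c - B * (dist x x1)\<^sup>2 \<le> pr x y"
proof -
  define v where "v = pr x1 y"
  have "ereal (v - 1) < \<phi> (x1, y)" using fin[OF x1 y] by (simp add: v_def)
  from lsc_ball[OF lsc_x[OF y] this] obtain r where r: "r > 0"
    "\<And>u. dist u x1 < r \<Longrightarrow> ereal (v - 1) < \<phi> (u, y)" by blast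
  from small_tau[OF r(1)] obtain \<tau> where tau: "\<tau> \<in> adm_tau l" "0 < \<tau>" "1 \<le> (r/2)\<^sup>2 / (2*\<tau>)" by blast
  have mu: "0 < 1/\<tau> + l" using mu_pos[OF tau(1)] .
  have main: "v - 1 - (1/(2*\<tau>)) * (dist x x1)\<^sup>2 \<le> pr x y" if x: "x \<in> DX \<phi>" for x
  proof (cases "dist x x1 < r")
    case True
    hence "v - 1 < pr x y" using r(2)[OF True] fin[OF x y] by simp
    moreover have "0 \<le> (1/(2*\<tau>)) * (dist x x1)\<^sup>2" using tau(2) by simp
    ultimately show ?thesis by linarith
  next
    case False
    obtain \<gamma> where g: "continuous_on {0..1} \<gamma>" "\<gamma> 0 = x1" "\<gamma> 1 = x"
      "\<And>t. t \<in> {0..1} \<Longrightarrow> \<gamma> t \<in> DX \<phi> \<and> FF \<tau> (x1, y) (\<gamma> t) y \<le> (1-t) * FF \<tau> (x1, y) x1 y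
          + t * FF \<tau> (x1, y) x y - (1/\<tau>+l)/2*t*(1-t)*(dist x1 x)\<^sup>2"
      using cvx[OF x1 x y tau(1), of "(x1, y)"] by blast
    have cont: "continuous_on {0..1} (\<lambda>t. dist (\<gamma> t) x1)"
      by (intro continuous_on_dist g(1) continuous_on_const)
    have "dist (\<gamma> 0) x1 \<le> r/2" "r/2 \<le> dist (\<gamma> 1) x1" using g False r(1) by auto
    from IVT'[of "\<lambda>t. dist (\<gamma> t) x1", OF this _ cont] obtain t where
      t: "0 \<le> t" "t \<le> 1" "dist (\<gamma> t) x1 = r/2" by auto
    have tpos: "0 < t" using t g(2) r(1) by (cases "t = 0") auto
    from g(4)[of t] t have gt: "\<gamma> t \<in> DX \<phi>" and
      ineq: "FF \<tau> (x1, y) (\<gamma> t) y \<le> (1-t) * FF \<tau> (x1, y) x1 y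
          + t * FF \<tau> (x1, y) x y - (1/\<tau>+l)/2*t*(1-t)*(dist x1 x)\<^sup>2" by auto
    have "v - 1 < pr (\<gamma> t) y" using r(2)[of "\<gamma> t"] t(3) r(1) fin[OF gt y] by simp
    moreover have "1 \<le> (dist (\<gamma> t) x1)\<^sup>2 / (2*\<tau>)" unfolding t(3) using tau(3) .
    ultimately have "v \<le> FF \<tau> (x1, y) (\<gamma> t) y" unfolding FF_self_y by linarith
    moreover have "0 \<le> (1/\<tau>+l)/2*t*(1-t)*(dist x1 x)\<^sup>2" using mu t by simp
    moreover have e: "FF \<tau> (x1, y) x1 y = v" by (simp add: FF_self_y v_def)
    ultimately have "v \<le> (1-t) * v + t * FF \<tau> (x1, y) x y" using ineq[unfolded e] by linarith
    hence "t * v \<le> t * FF \<tau> (x1, y) x y" by (simp add: algebra_simps)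
    hence "v \<le> FF \<tau> (x1, y) x y" using tpos by simp
    thus ?thesis by (simp add: FF_self_y algebra_simps)
  qed
  show thesis using that[of "1/(2*\<tau>)" "v - 1"] main tau(2) by simp
qed

lemma UB:
  assumes x: "x \<in> DX \<phi>" and y1: "y1 \<in> DY \<phi>"
  obtains c B where "B \<ge> 0" "\<And>y. y \<in> DY \<phi> \<Longrightarrow> pr x y \<le> c + B * (dist y y1)\<^sup>2"
proof -
  define v where "v = pr x y1"
  have "\<phi> (x, y1) < ereal (v + 1)" using fin[OF x y1] by (simp add: v_def)
  from usc_ball[OF usc_y[OF x] this] obtain r where r: "r > 0"
    "\<And>u. dist u y1 < r \<Longrightarrow> \<phi> (x, u) < ereal (v + 1)" by blast
  from small_tau[OF r(1)] obtain \<tau> where tau: "\<tau> \<in> adm_tau l" "0 < \<tau>" "1 \<le> (r/2)\<^sup>2 / (2*\<tau>)" by blast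
  have mu: "0 < 1/\<tau> + l" using mu_pos[OF tau(1)] .
  have main: "pr x y \<le> v + 1 + (1/(2*\<tau>)) * (dist y y1)\<^sup>2" if y: "y \<in> DY \<phi>" for y
  proof (cases "dist y y1 < r")
    case True
    hence "pr x y < v + 1" using r(2)[OF True] fin[OF x y] by simp
    moreover have "0 \<le> (1/(2*\<tau>)) * (dist y y1)\<^sup>2" using tau(2) by simp
    ultimately show ?thesis by linarith
  next
    case False
    obtain \<sigma> where g: "continuous_on {0..1} \<sigma>" "\<sigma> 0 = y1" "\<sigma> 1 = y"
      "\<And>t. t \<in> {0..1} \<Longrightarrow> \<sigma> t \<in> DY \<phi> \<and> (\<forall>x'\<in>DX \<phi>. (1-t) * FF \<tau> (x, y1) x' y1 + t * FF \<tau> (x, y1) x' y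
          + (1/\<tau>+l)/2*t*(1-t)*(dist y1 y)\<^sup>2 \<le> FF \<tau> (x, y1) x' (\<sigma> t))"
      using ccv[OF y1 y x tau(1), of "(x, y1)"] by blast
    have cont: "continuous_on {0..1} (\<lambda>t. dist (\<sigma> t) y1)"
      by (intro continuous_on_dist g(1) continuous_on_const)
    have "dist (\<sigma> 0) y1 \<le> r/2" "r/2 \<le> dist (\<sigma> 1) y1" using g False r(1) by auto
    from IVT'[of "\<lambda>t. dist (\<sigma> t) y1", OF this _ cont] obtain t where
      t: "0 \<le> t" "t \<le> 1" "dist (\<sigma> t) y1 = r/2" by auto
    have tpos: "0 < t" using t g(2) r(1) by (cases "t = 0") auto
    from g(4)[of t] t x have gt: "\<sigma> t \<in> DY \<phi>" and
      ineq: "(1-t) * FF \<tau> (x, y1) x y1 + t * FF \<tau> (x, y1) x y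
          + (1/\<tau>+l)/2*t*(1-t)*(dist y1 y)\<^sup>2 \<le> FF \<tau> (x, y1) x (\<sigma> t)" by auto
    have "pr x (\<sigma> t) < v + 1" using r(2)[of "\<sigma> t"] t(3) r(1) fin[OF x gt] by simp
    moreover have "1 \<le> (dist (\<sigma> t) y1)\<^sup>2 / (2*\<tau>)" unfolding t(3) using tau(3) .
    ultimately have "FF \<tau> (x, y1) x (\<sigma> t) \<le> v" unfolding FF_self_x by linarith
    moreover have "0 \<le> (1/\<tau>+l)/2*t*(1-t)*(dist y1 y)\<^sup>2" using mu t by simp
    moreover have e: "FF \<tau> (x, y1) x y1 = v" by (simp add: FF_self_x v_def)
    ultimately have "(1-t) * v + t * FF \<tau> (x, y1) x y \<le> v" using ineq[unfolded e] by linarith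
    hence "t * FF \<tau> (x, y1) x y \<le> t * v" by (simp add: algebra_simps)
    hence "FF \<tau> (x, y1) x y \<le> v" using tpos by simp
    thus ?thesis by (simp add: FF_self_x algebra_simps)
  qed
  show thesis using that[of "1/(2*\<tau>)" "v + 1"] main tau(2) by simp
qed

end

lemma ev_inv: "0 < e \<Longrightarrow> eventually (\<lambda>n. 1/(real n + 1) < e) sequentially"
proof -
  assume e: "0 < e"
  obtain N :: nat where N: "1/e < N" using reals_Archimedean2 by blast
  have "1/(real n + 1) < e" if "N \<le> n" for n
  proof -
    have "1/e < real n + 1" using N that by linarith
    thus ?thesis using e by (simp add: field_simps)
  qed
  thus ?thesis unfolding eventually_sequentially by blast
qed

lemma alg1: "(a::real) \<le> (1-t)*a + t*b - c*t*(1-t)*D \<Longrightarrow> t*(a + c*D) \<le> t*(b + t*(c*D))"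
  by (simp add: algebra_simps)
lemma alg2: "(1-t)*a + t*b + c*t*(1-t)*D \<le> (a::real) \<Longrightarrow> t*(b + c*D) \<le> t*(a + t*(c*D))"
  by (simp add: algebra_simps)

context sp begin

lemma sc_cvx:
  assumes y: "y \<in> DY \<phi>" and xs: "xs \<in> DX \<phi>" and tau: "\<tau> \<in> adm_tau l"
    and mn: "\<And>x. x \<in> DX \<phi> \<Longrightarrow> FF \<tau> z xs y \<le> FF \<tau> z x y" and x: "x \<in> DX \<phi>"
  shows "FF \<tau> z xs y + (1/\<tau>+l)/2*(dist x xs)\<^sup>2 \<le> FF \<tau> z x y"
proof -
  obtain \<gamma> where "continuous_on {0..1} \<gamma>" "\<gamma> 0 = xs" "\<gamma> 1 = x" and g: "\<And>t. t \<in> {0..1} \<Longrightarrow> \<gamma> t \<in> DX \<phi> \<and> FF \<tau> z (\<gamma> t) y \<le> (1-t) * FF \<tau> z xs y + t * FF \<tau> z x y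
          - (1/\<tau>+l)/2*t*(1-t)*(dist xs x)\<^sup>2"
    by (rule cvx[OF xs x y tau, of z]) blast
  let ?a = "FF \<tau> z xs y" and ?b = "FF \<tau> z x y" and ?K = "(1/\<tau>+l)/2*(dist x xs)\<^sup>2"
  show ?thesis
  proof (rule lim_ineq[where K = ?K])
    fix t :: real assume t: "0 < t" "t \<le> 1"
    have "t \<in> {0..1}" using t by simp
    note gt = g[OF this]
    have "\<gamma> t \<in> DX \<phi>" using gt by (rule conjunct1)
    have i: "FF \<tau> z (\<gamma> t) y \<le> (1-t) * ?a + t * ?b
          - (1/\<tau>+l)/2*t*(1-t)*(dist xs x)\<^sup>2" using gt by (rule conjunct2)
    have "?a \<le> FF \<tau> z (\<gamma> t) y" using mn \<open>\<gamma> t \<in> DX \<phi>\<close> by blast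
    hence "?a \<le> (1-t) * ?a + t * ?b - (1/\<tau>+l)/2*t*(1-t)*(dist xs x)\<^sup>2" using i by linarith
    hence "t * (?a + ?K) \<le> t * (?b + t * ?K)" unfolding dist_commute[of xs x] by (rule alg1)
    thus "?a + ?K \<le> ?b + t * ?K" using t by simp
  qed
qed

lemma sc_ccv:
  assumes x: "x \<in> DX \<phi>" and ys: "ys \<in> DY \<phi>" and tau: "\<tau> \<in> adm_tau l"
    and mx: "\<And>y. y \<in> DY \<phi> \<Longrightarrow> FF \<tau> z x y \<le> FF \<tau> z x ys" and y: "y \<in> DY \<phi>"
  shows "FF \<tau> z x y + (1/\<tau>+l)/2*(dist y ys)\<^sup>2 \<le> FF \<tau> z x ys"
proof -
  obtain \<sigma> where "continuous_on {0..1} \<sigma>" "\<sigma> 0 = ys" "\<sigma> 1 = y" and g: "\<And>t. t \<in> {0..1} \<Longrightarrow> \<sigma> t \<in> DY \<phi> \<and> (\<forall>x'\<in>DX \<phi>. (1-t) * FF \<tau> z x' ys + t * FF \<tau> z x' y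
          + (1/\<tau>+l)/2*t*(1-t)*(dist ys y)\<^sup>2 \<le> FF \<tau> z x' (\<sigma> t))"
    by (rule ccv[OF ys y x tau, of z]) blast
  let ?a = "FF \<tau> z x ys" and ?b = "FF \<tau> z x y" and ?K = "(1/\<tau>+l)/2*(dist y ys)\<^sup>2"
  show ?thesis
  proof (rule lim_ineq[where K = ?K])
    fix t :: real assume t: "0 < t" "t \<le> 1"
    have "t \<in> {0..1}" using t by simp
    note gt = g[OF this]
    have "\<sigma> t \<in> DY \<phi>" using gt by (rule conjunct1)
    have i: "(1-t) * ?a + t * ?b
          + (1/\<tau>+l)/2*t*(1-t)*(dist ys y)\<^sup>2 \<le> FF \<tau> z x (\<sigma> t)" using gt[THEN conjunct2] x by blast
    have "FF \<tau> z x (\<sigma> t) \<le> ?a" using mx \<open>\<sigma> t \<in> DY \<phi>\<close> by blast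
    hence "(1-t) * ?a + t * ?b + (1/\<tau>+l)/2*t*(1-t)*(dist ys y)\<^sup>2 \<le> ?a" using i by linarith
    hence "t * (?b + ?K) \<le> t * (?a + t * ?K)" unfolding dist_commute[of ys y] by (rule alg2)
    thus "?b + ?K \<le> ?a + t * ?K" using t by simp
  qed
qed

end

lemma alg3: "(1-t)*(s + a) + t*F < s + t*t \<Longrightarrow> 0 \<le> (1-t)*a \<Longrightarrow> 0 < t \<Longrightarrow> F < (s::real) + t"
proof -
  assume h: "(1-t)*(s + a) + t*F < s + t*t" "0 \<le> (1-t)*a" "0 < t"
  hence "t*F < t*(s + t)" by (simp add: algebra_simps)
  thus ?thesis using h(3) by simp
qed
lemma alg4: "(1-t)*(s + m/2*e) + t*(c - B*e - K) < s + t*t \<Longrightarrow> e*(m/2*(1-t) - t*B) < t*(s - c + K + (t::real))"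
  by (simp add: algebra_simps)
lemma alg5: assumes "0 < m" "0 \<le> B" "T \<le> m/(2*m+4*B)" shows "m/4 \<le> m/2*(1-T) - T*(B::real)"
proof -
  have "T*(2*m+4*B) \<le> m" using assms by (simp add: field_simps)
  thus ?thesis by (simp add: algebra_simps)
qed

context sp begin

lemma pr_FF: "pr x y = FF \<tau> z x y - (dist x (fst z))\<^sup>2/(2*\<tau>) + (dist y (snd z))\<^sup>2/(2*\<tau>)"
  by (simp add: FF_def)

lemma tau_pos: "\<tau> \<in> adm_tau l \<Longrightarrow> 0 < \<tau>" by (simp add: adm_tau_def)

lemma saddle_upper:
  assumes tau: "\<tau> \<in> adm_tau l"
    and U: "\<And>y \<delta>. y \<in> DY \<phi> \<Longrightarrow> 0 < \<delta> \<Longrightarrow> \<exists>x\<in>DX \<phi>. FF \<tau> z x y < s + \<delta>"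
    and xs: "xs \<in> DX \<phi>" and ys: "ys \<in> DY \<phi>"
    and SC: "\<And>x. x \<in> DX \<phi> \<Longrightarrow> s + (1/\<tau>+l)/2*(dist x xs)\<^sup>2 \<le> FF \<tau> z x ys"
    and y': "y' \<in> DY \<phi>"
  shows "FF \<tau> z xs y' \<le> s"
proof -
  define m where "m = 1/\<tau> + l"
  have m: "0 < m" using mu_pos[OF tau] by (simp add: m_def)
  have t0: "0 < \<tau>" using tau_pos[OF tau] .
  obtain c B where B: "B \<ge> 0" and lb: "\<And>x. x \<in> DX \<phi> \<Longrightarrow> c - B * (dist x xs)\<^sup>2 \<le> pr x y'"
    by (rule LB[OF y' xs]) blast
  obtain \<sigma> where "continuous_on {0..1} \<sigma>" "\<sigma> 0 = ys" "\<sigma> 1 = y'" and sg: "\<And>t. t \<in> {0..1} \<Longrightarrow>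
      \<sigma> t \<in> DY \<phi> \<and> (\<forall>x'\<in>DX \<phi>. (1-t) * FF \<tau> z x' ys + t * FF \<tau> z x' y'
          + (1/\<tau>+l)/2*t*(1-t)*(dist ys y')\<^sup>2 \<le> FF \<tau> z x' (\<sigma> t))"
    by (rule ccv[OF ys y' xs tau, of z]) blast
  define T where "T n = 1 / real (n + 2)" for n :: nat
  have T: "0 < T n" "T n \<le> 1" for n by (auto simp: T_def)
  have Tlim: "T \<longlonglongrightarrow> 0"
  proof -
    have "(\<lambda>n. 1 / real n) \<longlonglongrightarrow> 0" by (rule lim_1_over_n)
    from LIMSEQ_ignore_initial_segment[OF this, of 2]
    have "(\<lambda>n. 1 / (2 + real n)) \<longlonglongrightarrow> 0" by simp
    moreover have "T = (\<lambda>n. 1 / (2 + real n))" by (simp add: T_def fun_eq_iff add.commute)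
    ultimately show ?thesis by simp
  qed
  define XX where "XX n = (SOME x. x \<in> DX \<phi> \<and> FF \<tau> z x (\<sigma> (T n)) < s + (T n)\<^sup>2)" for n
  have XX: "XX n \<in> DX \<phi> \<and> FF \<tau> z (XX n) (\<sigma> (T n)) < s + (T n)\<^sup>2" for n
  proof -
    have Tn: "T n \<in> {0..1}" using T[of n] by simp
    hence "\<sigma> (T n) \<in> DY \<phi>" using sg by blast
    from U[OF this, of "(T n)\<^sup>2"] T[of n] obtain x where "x \<in> DX \<phi> \<and> FF \<tau> z x (\<sigma> (T n)) < s + (T n)\<^sup>2"
      by auto
    thus ?thesis unfolding XX_def by (rule someI)
  qed
  define K where "K = (dist y' (snd z))\<^sup>2 / (2*\<tau>)"
  define C1 where "C1 = \<bar>s\<bar> + 1 + \<bar>c\<bar> + K"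
  have key: "FF \<tau> z (XX n) y' < s + T n \<and> (dist (XX n) xs)\<^sup>2 * (m/2*(1 - T n) - T n * B) < T n * C1" for n
  proof -
    define x where "x = XX n"
    define t where "t = T n"
    define e where "e = (dist x xs)\<^sup>2"
    have x: "x \<in> DX \<phi>" and i2: "FF \<tau> z x (\<sigma> t) < s + t*t"
      using XX[of n] by (auto simp: x_def t_def power2_eq_square)
    have tt: "0 < t" "t \<le> 1" using T[of n] by (auto simp: t_def)
    have t01: "t \<in> {0..1}" using tt by simp
    have i1: "(1-t) * FF \<tau> z x ys + t * FF \<tau> z x y' + m/2*t*(1-t)*(dist ys y')\<^sup>2 \<le> FF \<tau> z x (\<sigma> t)"
      unfolding m_def using sg[OF t01, THEN conjunct2, rule_format, OF x] .
    have D2: "0 \<le> m/2*t*(1-t)*(dist ys y')\<^sup>2" using m tt by simp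
    have i3: "s + m/2*e \<le> FF \<tau> z x ys" using SC[OF x] by (simp add: m_def e_def)
    have mono: "(1-t)*(s + m/2*e) \<le> (1-t) * FF \<tau> z x ys" using i3 tt by (intro mult_left_mono) auto
    have A: "(1-t)*(s + m/2*e) + t * FF \<tau> z x y' < s + t*t" using i1 i2 D2 mono by linarith
    have p1: "FF \<tau> z x y' < s + t"
      by (rule alg3[OF A]) (use m tt in \<open>simp add: e_def\<close>, fact)
    have nn: "0 \<le> (dist x (fst z))\<^sup>2/(2*\<tau>)" using t0 by simp
    have "c - B*e - K \<le> FF \<tau> z x y'"
      using lb[OF x] nn unfolding FF_def K_def e_def by linarith
    hence "t*(c - B*e - K) \<le> t * FF \<tau> z x y'" using tt by (intro mult_left_mono) auto
    hence "(1-t)*(s + m/2*e) + t*(c - B*e - K) < s + t*t" using A by linarith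
    hence "e*(m/2*(1-t) - t*B) < t*(s - c + K + t)" by (rule alg4)
    also have "\<dots> \<le> t * C1"
    proof (rule mult_left_mono)
      show "s - c + K + t \<le> C1" unfolding C1_def using tt(2) abs_ge_self[of s] abs_ge_minus_self[of c] by linarith
    qed (use tt in simp)
    finally show ?thesis using p1 by (simp add: x_def t_def e_def)
  qed
  have "0 \<le> K" using t0 by (simp add: K_def)
  hence C1: "0 \<le> C1" unfolding C1_def by simp
  have "0 < m/(2*m+4*B)" using m B by simp
  from order_tendstoD(2)[OF Tlim this] have ev1: "eventually (\<lambda>n. T n < m/(2*m+4*B)) sequentially" .
  have ebound: "eventually (\<lambda>n. (dist (XX n) xs)\<^sup>2 \<le> (4*C1/m) * T n) sequentially"
  proof (rule eventually_mono[OF ev1])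
    fix n assume "T n < m/(2*m+4*B)"
    hence co: "m/4 \<le> m/2*(1 - T n) - T n * B" using alg5[OF m B] by simp
    have "(dist (XX n) xs)\<^sup>2 * (m/4) \<le> (dist (XX n) xs)\<^sup>2 * (m/2*(1 - T n) - T n * B)"
      using co by (intro mult_left_mono) auto
    also have "\<dots> < T n * C1" using key[of n] by simp
    finally show "(dist (XX n) xs)\<^sup>2 \<le> (4*C1/m) * T n" using m by (simp add: field_simps)
  qed
  have lim4: "(\<lambda>n. 4*C1/m * T n) \<longlonglongrightarrow> 0" by (rule tendsto_mult_right_zero[OF Tlim])
  have ev0: "eventually (\<lambda>n. 0 \<le> (dist (XX n) xs)\<^sup>2) sequentially" by simp
  have elim: "(\<lambda>n. (dist (XX n) xs)\<^sup>2) \<longlonglongrightarrow> 0"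
    by (rule tendsto_sandwich[OF ev0 ebound tendsto_const lim4])
  have XXlim: "XX \<longlonglongrightarrow> xs"
  proof -
    have eq: "sqrt ((dist (XX n) xs)\<^sup>2) = dist (XX n) xs" for n by (rule real_sqrt_unique) auto
    have "(\<lambda>n. dist (XX n) xs) \<longlonglongrightarrow> 0"
      using tendsto_real_sqrt[OF elim] unfolding eq real_sqrt_zero .
    thus ?thesis by (rule tendsto_dist_iff[THEN iffD2])
  qed
  have dlim: "(\<lambda>n. (dist (XX n) (fst z))\<^sup>2 / (2*\<tau>)) \<longlonglongrightarrow> (dist xs (fst z))\<^sup>2 / (2*\<tau>)"
    using t0 by (intro tendsto_intros XXlim) auto
  define Q where "Q = s - (dist xs (fst z))\<^sup>2 / (2*\<tau>) + K"
  have "\<phi> (xs, y') \<le> ereal Q"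
  proof (rule ereal_le_eps)
    fix e :: real assume e: "0 < e"
    show "\<phi> (xs, y') \<le> ereal (Q + e)"
    proof (rule lsc_seq[OF lsc_x[OF y'] XXlim])
      have e2: "0 < e/2" using e by simp
      have ev2: "eventually (\<lambda>n. T n < e/2) sequentially" using order_tendstoD(2)[OF Tlim e2] .
      have ev3: "eventually (\<lambda>n. (dist xs (fst z))\<^sup>2 / (2*\<tau>) - e/2 < (dist (XX n) (fst z))\<^sup>2 / (2*\<tau>)) sequentially"
        using order_tendstoD(1)[OF dlim, of "(dist xs (fst z))\<^sup>2 / (2*\<tau>) - e/2"] e by simp
      show "eventually (\<lambda>n. \<phi> (XX n, y') \<le> ereal (Q + e)) sequentially"
      proof (rule eventually_mono[OF eventually_conj[OF ev2 ev3]])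
        fix n assume h: "T n < e/2 \<and> (dist xs (fst z))\<^sup>2 / (2*\<tau>) - e/2 < (dist (XX n) (fst z))\<^sup>2 / (2*\<tau>)"
        have xn: "XX n \<in> DX \<phi>" using XX by blast
        have "pr (XX n) y' = FF \<tau> z (XX n) y' - (dist (XX n) (fst z))\<^sup>2 / (2*\<tau>) + K"
          by (simp add: FF_def K_def)
        also have "\<dots> \<le> Q + e" using key[of n] h by (simp add: Q_def)
        finally show "\<phi> (XX n, y') \<le> ereal (Q + e)" using fin[OF xn y'] by simp
      qed
    qed
  qed
  hence "pr xs y' \<le> Q" using fin[OF xs y'] by simp
  thus ?thesis by (simp add: FF_def Q_def K_def)
qed

end

lemma half_eq: "(1 - 1/2) * A + 1/2 * B + m/2*(1/2)*(1-1/2)*D = (A+B)/2 + m/8*(D::real)"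
  by (simp add: field_simps)
lemma half_eq2: "(1 - 1/2) * A + 1/2 * B - m/2*(1/2)*(1-1/2)*D = (A+B)/2 - m/8*(D::real)"
  by (simp add: field_simps)
lemma lin1: "s - ea < A \<Longrightarrow> s - eb < B \<Longrightarrow> (A + B)/2 + c \<le> W \<Longrightarrow> W < s + t \<Longrightarrow>
   c \<le> (ea + eb)/2 + t*(1::real)"
  by argo
lemma lin2: "A < s + ea \<Longrightarrow> B < s + eb \<Longrightarrow> W \<le> (A + B)/2 - c \<Longrightarrow> s \<le> W \<Longrightarrow>
   c \<le> (ea + eb)/(2::real)"
  by (simp add: field_simps)
lemma m8: "0 < m \<Longrightarrow> m/8*D \<le> (x+y)/2 \<Longrightarrow> D \<le> (4/m)*(x+(y::real))"
  by (simp add: field_simps)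

context sp begin

lemma exist_from_s:
  assumes tau: "\<tau> \<in> adm_tau l"
    and U: "\<And>y \<delta>. y \<in> DY \<phi> \<Longrightarrow> 0 < \<delta> \<Longrightarrow> \<exists>x\<in>DX \<phi>. FF \<tau> z x y < s + \<delta>"
    and L: "\<And>\<epsilon>. 0 < \<epsilon> \<Longrightarrow> \<exists>y\<in>DY \<phi>. \<forall>x\<in>DX \<phi>. s - \<epsilon> < FF \<tau> z x y"
  shows "\<exists>p. is_saddle (Phi \<phi> \<tau> z) p"
proof -
  define m where "m = 1/\<tau> + l"
  have m: "0 < m" using mu_pos[OF tau] by (simp add: m_def)
  have t0: "0 < \<tau>" using tau_pos[OF tau] .
  obtain x0 y0 where x0: "x0 \<in> DX \<phi>" and y0: "y0 \<in> DY \<phi>" by (rule Dom_ne)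
  define Y where "Y n = (SOME y. y \<in> DY \<phi> \<and> (\<forall>x\<in>DX \<phi>. s - 1/(real n+1) < FF \<tau> z x y))" for n :: nat
  have Y: "Y n \<in> DY \<phi> \<and> (\<forall>x\<in>DX \<phi>. s - 1/(real n+1) < FF \<tau> z x (Y n))" for n
  proof -
    have "0 < 1/(real n+1)" by simp
    from L[OF this] obtain y where "y \<in> DY \<phi> \<and> (\<forall>x\<in>DX \<phi>. s - 1/(real n+1) < FF \<tau> z x y)" by blast
    thus ?thesis unfolding Y_def by (rule someI)
  qed
  have dY: "(dist (Y a) (Y b))\<^sup>2 \<le> (4/m) * (1/(real a+1) + 1/(real b+1))" for a b
  proof -
    have ya: "Y a \<in> DY \<phi>" and yb: "Y b \<in> DY \<phi>" using Y by blast+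
    obtain \<sigma> where "continuous_on {0..1} \<sigma>" "\<sigma> 0 = Y a" "\<sigma> 1 = Y b" and sg: "\<And>t. t \<in> {0..1} \<Longrightarrow>
      \<sigma> t \<in> DY \<phi> \<and> (\<forall>x'\<in>DX \<phi>. (1-t) * FF \<tau> z x' (Y a) + t * FF \<tau> z x' (Y b)
          + (1/\<tau>+l)/2*t*(1-t)*(dist (Y a) (Y b))\<^sup>2 \<le> FF \<tau> z x' (\<sigma> t))"
      by (rule ccv[OF ya yb x0 tau, of z]) blast
    have h: "(1/2::real) \<in> {0..1}" by simp
    have w: "\<sigma> (1/2) \<in> DY \<phi>" using sg[OF h] by (rule conjunct1)
    have wi: "(FF \<tau> z x (Y a) + FF \<tau> z x (Y b))/2 + m/8*(dist (Y a) (Y b))\<^sup>2 \<le> FF \<tau> z x (\<sigma> (1/2))"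
      if x: "x \<in> DX \<phi>" for x
      using sg[OF h, THEN conjunct2, rule_format, OF x] unfolding half_eq m_def[symmetric] .
    let ?ea = "1/(real a+1)" and ?eb = "1/(real b+1)"
    have "m/8*(dist (Y a) (Y b))\<^sup>2 \<le> (?ea + ?eb)/2"
    proof (rule lim_ineq[where K=1])
      fix t :: real assume t: "0 < t" "t \<le> 1"
      from U[OF w t(1)] obtain x where x: "x \<in> DX \<phi>" and xl: "FF \<tau> z x (\<sigma> (1/2)) < s + t" by blast
      have i1: "s - ?ea < FF \<tau> z x (Y a)" and i2: "s - ?eb < FF \<tau> z x (Y b)" using Y x by blast+
      show "m/8*(dist (Y a) (Y b))\<^sup>2 \<le> (?ea + ?eb)/2 + t * 1" by (rule lin1[OF i1 i2 wi[OF x] xl])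
    qed
    thus ?thesis by (rule m8[OF m])
  qed
  have "Cauchy Y" by (rule cauchy_from_sq[OF dY]) (use m in simp)
  then obtain ys where Ylim: "Y \<longlonglongrightarrow> ys" using Cauchy_convergent convergent_def by blast
  have dlimY: "(\<lambda>n. (dist (Y n) (snd z))\<^sup>2/(2*\<tau>)) \<longlonglongrightarrow> (dist ys (snd z))\<^sup>2/(2*\<tau>)"
    using t0 by (intro tendsto_intros Ylim) auto
  have ysge: "ereal (s - (dist x (fst z))\<^sup>2/(2*\<tau>) + (dist ys (snd z))\<^sup>2/(2*\<tau>)) \<le> \<phi> (x, ys)"
    if x: "x \<in> DX \<phi>" for x
  proof (rule ereal_ge_eps)
    fix e :: real assume e: "0 < e"
    show "ereal (s - (dist x (fst z))\<^sup>2/(2*\<tau>) + (dist ys (snd z))\<^sup>2/(2*\<tau>) - e) \<le> \<phi> (x, ys)"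
    proof (rule usc_seq[OF usc_y[OF x] Ylim])
      have e2: "0 < e/2" using e by simp
      have ev2: "eventually (\<lambda>n. 1/(real n+1) < e/2) sequentially" by (rule ev_inv[OF e2])
      have ev3: "eventually (\<lambda>n. (dist ys (snd z))\<^sup>2/(2*\<tau>) - e/2 < (dist (Y n) (snd z))\<^sup>2/(2*\<tau>)) sequentially"
        using order_tendstoD(1)[OF dlimY, of "(dist ys (snd z))\<^sup>2/(2*\<tau>) - e/2"] e by simp
      show "eventually (\<lambda>n. ereal (s - (dist x (fst z))\<^sup>2/(2*\<tau>) + (dist ys (snd z))\<^sup>2/(2*\<tau>) - e) \<le> \<phi> (x, Y n)) sequentially"
      proof (rule eventually_mono[OF eventually_conj[OF ev2 ev3]])
        fix n assume h: "1/(real n+1) < e/2 \<and> (dist ys (snd z))\<^sup>2/(2*\<tau>) - e/2 < (dist (Y n) (snd z))\<^sup>2/(2*\<tau>)"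
        have yn: "Y n \<in> DY \<phi>" and yv: "s - 1/(real n+1) < FF \<tau> z x (Y n)" using Y x by blast+
        have "s - (dist x (fst z))\<^sup>2/(2*\<tau>) + (dist ys (snd z))\<^sup>2/(2*\<tau>) - e \<le> pr x (Y n)"
          using h yv unfolding FF_def by linarith
        thus "ereal (s - (dist x (fst z))\<^sup>2/(2*\<tau>) + (dist ys (snd z))\<^sup>2/(2*\<tau>) - e) \<le> \<phi> (x, Y n)"
          using fin[OF x yn] by simp
      qed
    qed
  qed
  have ys: "ys \<in> DY \<phi>"
  proof (rule ccontr)
    assume "ys \<notin> DY \<phi>"
    hence "\<phi> (x0, ys) = -\<infinity>" using A1y x0 by blast
    thus False using ysge[OF x0] by simp
  qed
  have ysF: "s \<le> FF \<tau> z x ys" if x: "x \<in> DX \<phi>" for x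
    using ysge[OF x] fin[OF x ys] unfolding FF_def by simp
  define X where "X n = (SOME x. x \<in> DX \<phi> \<and> FF \<tau> z x ys < s + 1/(real n+1))" for n :: nat
  have X: "X n \<in> DX \<phi> \<and> FF \<tau> z (X n) ys < s + 1/(real n+1)" for n
  proof -
    have "0 < 1/(real n+1)" by simp
    from U[OF ys this] obtain x where "x \<in> DX \<phi> \<and> FF \<tau> z x ys < s + 1/(real n+1)" by blast
    thus ?thesis unfolding X_def by (rule someI)
  qed
  have dX: "(dist (X a) (X b))\<^sup>2 \<le> (4/m) * (1/(real a+1) + 1/(real b+1))" for a b
  proof -
    have xa: "X a \<in> DX \<phi>" and xb: "X b \<in> DX \<phi>" using X by blast+
    obtain \<gamma> where "continuous_on {0..1} \<gamma>" "\<gamma> 0 = X a" "\<gamma> 1 = X b" and g: "\<And>t. t \<in> {0..1} \<Longrightarrow>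
      \<gamma> t \<in> DX \<phi> \<and> FF \<tau> z (\<gamma> t) ys \<le> (1-t) * FF \<tau> z (X a) ys + t * FF \<tau> z (X b) ys
          - (1/\<tau>+l)/2*t*(1-t)*(dist (X a) (X b))\<^sup>2"
      by (rule cvx[OF xa xb ys tau, of z]) blast
    have h: "(1/2::real) \<in> {0..1}" by simp
    have w: "\<gamma> (1/2) \<in> DX \<phi>" using g[OF h] by (rule conjunct1)
    have wi: "FF \<tau> z (\<gamma> (1/2)) ys \<le> (FF \<tau> z (X a) ys + FF \<tau> z (X b) ys)/2 - m/8*(dist (X a) (X b))\<^sup>2"
      using g[OF h, THEN conjunct2] unfolding half_eq2 m_def[symmetric] .
    have i1: "FF \<tau> z (X a) ys < s + 1/(real a+1)" and i2: "FF \<tau> z (X b) ys < s + 1/(real b+1)" using X by blast+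
    have "m/8*(dist (X a) (X b))\<^sup>2 \<le> (1/(real a+1) + 1/(real b+1))/2" by (rule lin2[OF i1 i2 wi ysF[OF w]])
    thus ?thesis by (rule m8[OF m])
  qed
  have "Cauchy X" by (rule cauchy_from_sq[OF dX]) (use m in simp)
  then obtain xs where Xlim: "X \<longlonglongrightarrow> xs" using Cauchy_convergent convergent_def by blast
  have dlimX: "(\<lambda>n. (dist (X n) (fst z))\<^sup>2/(2*\<tau>)) \<longlonglongrightarrow> (dist xs (fst z))\<^sup>2/(2*\<tau>)"
    using t0 by (intro tendsto_intros Xlim) auto
  have xsle: "\<phi> (xs, ys) \<le> ereal (s - (dist xs (fst z))\<^sup>2/(2*\<tau>) + (dist ys (snd z))\<^sup>2/(2*\<tau>))"
  proof (rule ereal_le_eps)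
    fix e :: real assume e: "0 < e"
    show "\<phi> (xs, ys) \<le> ereal (s - (dist xs (fst z))\<^sup>2/(2*\<tau>) + (dist ys (snd z))\<^sup>2/(2*\<tau>) + e)"
    proof (rule lsc_seq[OF lsc_x[OF ys] Xlim])
      have e2: "0 < e/2" using e by simp
      have ev2: "eventually (\<lambda>n. 1/(real n+1) < e/2) sequentially" by (rule ev_inv[OF e2])
      have ev3: "eventually (\<lambda>n. (dist xs (fst z))\<^sup>2/(2*\<tau>) - e/2 < (dist (X n) (fst z))\<^sup>2/(2*\<tau>)) sequentially"
        using order_tendstoD(1)[OF dlimX, of "(dist xs (fst z))\<^sup>2/(2*\<tau>) - e/2"] e by simp
      show "eventually (\<lambda>n. \<phi> (X n, ys) \<le> ereal (s - (dist xs (fst z))\<^sup>2/(2*\<tau>) + (dist ys (snd z))\<^sup>2/(2*\<tau>) + e)) sequentially"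
      proof (rule eventually_mono[OF eventually_conj[OF ev2 ev3]])
        fix n assume h: "1/(real n+1) < e/2 \<and> (dist xs (fst z))\<^sup>2/(2*\<tau>) - e/2 < (dist (X n) (fst z))\<^sup>2/(2*\<tau>)"
        have xn: "X n \<in> DX \<phi>" and xv: "FF \<tau> z (X n) ys < s + 1/(real n+1)" using X by blast+
        have "pr (X n) ys \<le> s - (dist xs (fst z))\<^sup>2/(2*\<tau>) + (dist ys (snd z))\<^sup>2/(2*\<tau>) + e"
          using h xv unfolding FF_def by linarith
        thus "\<phi> (X n, ys) \<le> ereal (s - (dist xs (fst z))\<^sup>2/(2*\<tau>) + (dist ys (snd z))\<^sup>2/(2*\<tau>) + e)"
          using fin[OF xn ys] by simp
      qed
    qed
  qed
  have xs: "xs \<in> DX \<phi>"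
  proof (rule ccontr)
    assume "xs \<notin> DX \<phi>"
    hence "\<phi> (xs, ys) = \<infinity>" using A1x ys by blast
    thus False using xsle by simp
  qed
  have Fs: "FF \<tau> z xs ys = s"
  proof -
    have "FF \<tau> z xs ys \<le> s" using xsle fin[OF xs ys] unfolding FF_def by simp
    thus ?thesis using ysF[OF xs] by simp
  qed
  have SC: "s + (1/\<tau>+l)/2*(dist x xs)\<^sup>2 \<le> FF \<tau> z x ys" if x: "x \<in> DX \<phi>" for x
    using sc_cvx[OF ys xs tau _ x, of z] ysF Fs by simp
  have up: "FF \<tau> z xs y' \<le> s" if y': "y' \<in> DY \<phi>" for y'
    by (rule saddle_upper[OF tau U xs ys SC y']) auto
  have "is_saddle (Phi \<phi> \<tau> z) (xs, ys)"
    unfolding is_saddle_def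
  proof (intro allI conjI)
    fix x' y'
    have P: "Phi \<phi> \<tau> z (xs, ys) = ereal s" using Phi_eq[OF xs ys] Fs by simp
    show "Phi \<phi> \<tau> z (fst (xs, ys), y') \<le> Phi \<phi> \<tau> z (xs, ys)"
    proof (cases "y' \<in> DY \<phi>")
      case True thus ?thesis using P Phi_eq[OF xs True] up[OF True] by simp
    next
      case False thus ?thesis using Phi_minf[OF xs False] by simp
    qed
    show "Phi \<phi> \<tau> z (xs, ys) \<le> Phi \<phi> \<tau> z (x', snd (xs, ys))"
    proof (cases "x' \<in> DX \<phi>")
      case True thus ?thesis using P Phi_eq[OF True ys] ysF[OF True] by simp
    next
      case False thus ?thesis using Phi_inf[OF False ys] by simp
    qed
  qed
  thus ?thesis by blast
qed

end

context sp begin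

lemma exist_saddle:
  obtains \<tau>0 where "0 < \<tau>0" "\<And>\<tau> z. \<tau> \<in> adm_tau l \<Longrightarrow> \<tau> < \<tau>0 \<Longrightarrow> \<exists>p. is_saddle (Phi \<phi> \<tau> z) p"
proof -
  obtain x0 y0 where x0: "x0 \<in> DX \<phi>" and y0: "y0 \<in> DY \<phi>" by (rule Dom_ne)
  obtain c1 B1 where B1: "B1 \<ge> 0" and lb: "\<And>x. x \<in> DX \<phi> \<Longrightarrow> c1 - B1 * (dist x x0)\<^sup>2 \<le> pr x y0"
    by (rule LB[OF y0 x0]) blast
  obtain c2 B2 where B2: "B2 \<ge> 0" and ub: "\<And>y. y \<in> DY \<phi> \<Longrightarrow> pr x0 y \<le> c2 + B2 * (dist y y0)\<^sup>2"
    by (rule UB[OF x0 y0]) blast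
  define \<tau>0 where "\<tau>0 = 1/(4*(B1+B2+1))"
  have tp: "0 < \<tau>0" using B1 B2 by (simp add: \<tau>0_def)
  have main: "\<exists>p. is_saddle (Phi \<phi> \<tau> z) p" if tau: "\<tau> \<in> adm_tau l" and tl: "\<tau> < \<tau>0" for \<tau> z
  proof -
    have t0: "0 < \<tau>" using tau_pos[OF tau] .
    have "\<tau> * (4*(B1+B2+1)) < 1" using tl B1 B2 t0 by (simp add: \<tau>0_def field_simps)
    hence "4*\<tau>*B1 < 1" "4*\<tau>*B2 < 1" using t0 B1 B2 by (simp_all add: algebra_simps)
      (smt (verit) mult_nonneg_nonneg)+
    hence q1: "2*B1 \<le> 1/(2*\<tau>)" and q2: "2*B2 \<le> 1/(2*\<tau>)" using t0 by (simp_all add: field_simps)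
    define M where "M = c2 + 2*B2*(dist (snd z) y0)\<^sup>2 + (dist x0 (fst z))\<^sup>2/(2*\<tau>)"
    have FM: "FF \<tau> z x0 y \<le> M" if y: "y \<in> DY \<phi>" for y
    proof -
      have u: "pr x0 y \<le> c2 + B2 * (dist y y0)\<^sup>2" by (rule ub[OF y])
      have "B2 * (dist y y0)\<^sup>2 \<le> B2 * (2 * (dist y (snd z))\<^sup>2 + 2 * (dist (snd z) y0)\<^sup>2)"
        by (rule mult_left_mono[OF dist_sq_tri B2])
      hence v: "B2 * (dist y y0)\<^sup>2 \<le> 2*B2*(dist y (snd z))\<^sup>2 + 2*B2*(dist (snd z) y0)\<^sup>2"
        by (simp add: algebra_simps)
      have w: "2*B2*(dist y (snd z))\<^sup>2 \<le> (dist y (snd z))\<^sup>2/(2*\<tau>)"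
        using mult_right_mono[OF q2, of "(dist y (snd z))\<^sup>2"] by simp
      show ?thesis using u v w unfolding FF_def M_def by linarith
    qed
    define m0 where "m0 = c1 - 2*B1*(dist (fst z) x0)\<^sup>2 - (dist y0 (snd z))\<^sup>2/(2*\<tau>)"
    have Fm: "m0 \<le> FF \<tau> z x y0" if x: "x \<in> DX \<phi>" for x
    proof -
      have u: "c1 - B1 * (dist x x0)\<^sup>2 \<le> pr x y0" by (rule lb[OF x])
      have "B1 * (dist x x0)\<^sup>2 \<le> B1 * (2 * (dist x (fst z))\<^sup>2 + 2 * (dist (fst z) x0)\<^sup>2)"
        by (rule mult_left_mono[OF dist_sq_tri B1])
      hence v: "B1 * (dist x x0)\<^sup>2 \<le> 2*B1*(dist x (fst z))\<^sup>2 + 2*B1*(dist (fst z) x0)\<^sup>2"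
        by (simp add: algebra_simps)
      have w: "2*B1*(dist x (fst z))\<^sup>2 \<le> (dist x (fst z))\<^sup>2/(2*\<tau>)"
        using mult_right_mono[OF q1, of "(dist x (fst z))\<^sup>2"] by simp
      show ?thesis using u v w unfolding FF_def m0_def by linarith
    qed
    define \<psi> where "\<psi> y = (INF x\<in>DX \<phi>. ereal (FF \<tau> z x y))" for y
    define S where "S = (SUP y\<in>DY \<phi>. \<psi> y)"
    have S_le: "S \<le> ereal M" unfolding S_def
    proof (rule SUP_least)
      fix y assume y: "y \<in> DY \<phi>"
      show "\<psi> y \<le> ereal M" unfolding \<psi>_def by (rule INF_lower2[OF x0]) (use FM[OF y] in simp)
    qed
    have S_ge: "ereal m0 \<le> S" unfolding S_def
    proof (rule SUP_upper2[OF y0])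
      show "ereal m0 \<le> \<psi> y0" unfolding \<psi>_def by (rule INF_greatest) (use Fm in simp)
    qed
    obtain s where S: "S = ereal s" using S_le S_ge by (cases S) auto
    have U: "\<exists>x\<in>DX \<phi>. FF \<tau> z x y < s + \<delta>" if y: "y \<in> DY \<phi>" and d: "0 < \<delta>" for y \<delta>
    proof -
      have "\<psi> y \<le> S" unfolding S_def by (rule SUP_upper[OF y])
      also have "\<dots> < ereal (s + \<delta>)" using S d by simp
      finally have "(INF x\<in>DX \<phi>. ereal (FF \<tau> z x y)) < ereal (s + \<delta>)" unfolding \<psi>_def .
      then obtain x where "x \<in> DX \<phi>" "ereal (FF \<tau> z x y) < ereal (s + \<delta>)" unfolding INF_less_iff by blast
      thus ?thesis by auto
    qed
    have L: "\<exists>y\<in>DY \<phi>. \<forall>x\<in>DX \<phi>. s - \<epsilon> < FF \<tau> z x y" if e: "0 < \<epsilon>" for \<epsilon>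
    proof -
      have "ereal (s - \<epsilon>) < S" using S e by simp
      then obtain y where y: "y \<in> DY \<phi>" and yl: "ereal (s - \<epsilon>) < \<psi> y" unfolding S_def less_SUP_iff by blast
      have "s - \<epsilon> < FF \<tau> z x y" if x: "x \<in> DX \<phi>" for x
      proof -
        have "\<psi> y \<le> ereal (FF \<tau> z x y)" unfolding \<psi>_def by (rule INF_lower[OF x])
        from less_le_trans[OF yl this] show ?thesis by simp
      qed
      thus ?thesis using y by blast
    qed
    show ?thesis by (rule exist_from_s[OF tau U L]) auto
  qed
  show thesis using that tp main by blast
qed

lemma saddle_dom:
  assumes "is_saddle (Phi \<phi> \<tau> z) p" shows "p \<in> Dom \<phi>"
proof -
  obtain a b where p: "p = (a, b)" by (cases p)
  obtain x0 y0 where x0: "x0 \<in> DX \<phi>" and y0: "y0 \<in> DY \<phi>" by (rule Dom_ne)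
  have s1: "\<And>y'. Phi \<phi> \<tau> z (a, y') \<le> Phi \<phi> \<tau> z (a, b)" and s2: "\<And>x'. Phi \<phi> \<tau> z (a, b) \<le> Phi \<phi> \<tau> z (x', b)"
    using assms unfolding is_saddle_def p by auto
  have a: "a \<in> DX \<phi>"
  proof (rule ccontr)
    assume na: "a \<notin> DX \<phi>"
    show False
    proof (cases "b \<in> DY \<phi>")
      case True
      have "Phi \<phi> \<tau> z (a, b) = \<infinity>" by (rule Phi_inf[OF na True])
      thus False using s2[of x0] Phi_eq[OF x0 True] by simp
    next
      case False
      have "Phi \<phi> \<tau> z (a, y0) = \<infinity>" by (rule Phi_inf[OF na y0])
      moreover have "Phi \<phi> \<tau> z (x0, b) = -\<infinity>" by (rule Phi_minf[OF x0 False])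
      ultimately show False using s1[of y0] s2[of x0] by simp
    qed
  qed
  have b: "b \<in> DY \<phi>"
  proof (rule ccontr)
    assume nb: "b \<notin> DY \<phi>"
    have "Phi \<phi> \<tau> z (a, b) = -\<infinity>" by (rule Phi_minf[OF a nb])
    thus False using s1[of y0] Phi_eq[OF a y0] by simp
  qed
  show ?thesis using a b p by (simp add: Dom_def)
qed

lemma saddle_F:
  assumes "is_saddle (Phi \<phi> \<tau> z) (a, b)" "a \<in> DX \<phi>" "b \<in> DY \<phi>"
  shows "\<And>y. y \<in> DY \<phi> \<Longrightarrow> FF \<tau> z a y \<le> FF \<tau> z a b" "\<And>x. x \<in> DX \<phi> \<Longrightarrow> FF \<tau> z a b \<le> FF \<tau> z x b"
proof -
  fix y assume y: "y \<in> DY \<phi>"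
  have "Phi \<phi> \<tau> z (a, y) \<le> Phi \<phi> \<tau> z (a, b)" using assms(1) unfolding is_saddle_def by auto
  thus "FF \<tau> z a y \<le> FF \<tau> z a b" using Phi_eq[OF assms(2) y] Phi_eq[OF assms(2,3)] by simp
next
  fix x assume x: "x \<in> DX \<phi>"
  have "Phi \<phi> \<tau> z (a, b) \<le> Phi \<phi> \<tau> z (x, b)" using assms(1) unfolding is_saddle_def by auto
  thus "FF \<tau> z a b \<le> FF \<tau> z x b" using Phi_eq[OF x assms(3)] Phi_eq[OF assms(2,3)] by simp
qed

lemma sq_zero: "0 < m \<Longrightarrow> A + m/2*(dist u v)\<^sup>2 \<le> A \<Longrightarrow> u = v"
proof (rule ccontr)
  assume m: "0 < m" and h: "A + m/2*(dist u v)\<^sup>2 \<le> A" and "u \<noteq> v"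
  hence "0 < dist u v" by simp
  hence "0 < m/2*(dist u v)\<^sup>2" using m by simp
  thus False using h by simp
qed

lemma saddle_unique:
  assumes tau: "\<tau> \<in> adm_tau l" and sp: "is_saddle (Phi \<phi> \<tau> z) p" and sq: "is_saddle (Phi \<phi> \<tau> z) q"
  shows "p = q"
proof -
  obtain a b where p: "p = (a, b)" by (cases p)
  obtain c d where q: "q = (c, d)" by (cases q)
  have a: "a \<in> DX \<phi>" and b: "b \<in> DY \<phi>" using saddle_dom[OF sp] p by (auto simp: Dom_def)
  have c: "c \<in> DX \<phi>" and d: "d \<in> DY \<phi>" using saddle_dom[OF sq] q by (auto simp: Dom_def)
  note P = saddle_F[OF sp[unfolded p] a b] and Q = saddle_F[OF sq[unfolded q] c d]
  have e1: "FF \<tau> z c b \<le> FF \<tau> z c d" by (rule Q(1)[OF b])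
  have e2: "FF \<tau> z c d \<le> FF \<tau> z a d" by (rule Q(2)[OF a])
  have e3: "FF \<tau> z a d \<le> FF \<tau> z a b" by (rule P(1)[OF d])
  have e4: "FF \<tau> z a b \<le> FF \<tau> z c b" by (rule P(2)[OF c])
  have m: "0 < 1/\<tau> + l" by (rule mu_pos[OF tau])
  have "FF \<tau> z a b + (1/\<tau>+l)/2*(dist c a)\<^sup>2 \<le> FF \<tau> z c b"
    by (rule sc_cvx[OF b a tau P(2) c])
  hence "FF \<tau> z a b + (1/\<tau>+l)/2*(dist c a)\<^sup>2 \<le> FF \<tau> z a b" using e1 e2 e3 by linarith
  hence ca: "c = a" by (rule sq_zero[OF m])
  have "FF \<tau> z a d + (1/\<tau>+l)/2*(dist d b)\<^sup>2 \<le> FF \<tau> z a b"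
    by (rule sc_ccv[OF a b tau P(1) d])
  hence "FF \<tau> z a b + (1/\<tau>+l)/2*(dist d b)\<^sup>2 \<le> FF \<tau> z a b" using e2 e1 e4 by linarith
  hence db: "d = b" by (rule sq_zero[OF m])
  show ?thesis using p q ca db by simp
qed

lemma J_props:
  assumes tau: "\<tau> \<in> adm_tau l" and ex: "\<exists>p. is_saddle (Phi \<phi> \<tau> z) p"
  shows "is_saddle (Phi \<phi> \<tau> z) (J \<phi> \<tau> z)" "J \<phi> \<tau> z \<in> Dom \<phi>"
proof -
  have "\<exists>!p. is_saddle (Phi \<phi> \<tau> z) p" using ex saddle_unique[OF tau] by blast
  thus "is_saddle (Phi \<phi> \<tau> z) (J \<phi> \<tau> z)" unfolding J_def by (rule theI')
  thus "J \<phi> \<tau> z \<in> Dom \<phi>" by (rule saddle_dom)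
qed

end

lemma conv_alg:
  fixes Dt R P C B k :: real
  assumes "Dt*k \<le> R*k + P" "P \<le> C + 2*B*Dt + 2*B*R" "4*(B+1) \<le> k" "0\<le>B" "0 \<le> Dt" "0\<le>R" "0\<le>C"
  shows "Dt \<le> 3*R + 2*C/k"
proof -
  have k4: "4*B + 4 \<le> k" using assms(3) by simp
  have k: "0 < k" using k4 assms(4) by linarith
  have a: "Dt*(k/2) \<le> Dt*(k - 2*B)" using k4 assms(5) by (intro mult_left_mono) auto
  have b: "R*(k + 2*B) \<le> R*(3*k/2)" using k4 assms(6) by (intro mult_left_mono) auto
  have "Dt*(k - 2*B) \<le> R*(k + 2*B) + C" using assms(1,2) by (simp add: algebra_simps)
  hence "Dt*(k/2) \<le> R*(3*k/2) + C" using a b by linarith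
  thus ?thesis using k by (simp add: field_simps)
qed

lemma slope_alg:
  fixes u d1 d2 e1 e2 A1 A2 \<tau> :: real
  assumes "u \<le> (e1 + e2)/(2*\<tau>)" "e1 \<le> d1*(2*A1 + d1)" "e2 \<le> d2*(2*A2 + d2)"
    "0 \<le> d1" "d1 \<le> \<delta>" "0 \<le> d2" "d2 \<le> \<delta>" "\<delta> < 1" "0 \<le> A1" "0 \<le> A2" "0 < \<tau>"
  shows "u \<le> \<delta> * ((2*A1 + 2*A2 + 2)/(2*\<tau>))"
proof -
  have "d1*(2*A1 + d1) \<le> \<delta>*(2*A1 + 1)" using assms by (intro mult_mono) auto
  moreover have "d2*(2*A2 + d2) \<le> \<delta>*(2*A2 + 1)" using assms by (intro mult_mono) auto
  ultimately have "e1 + e2 \<le> \<delta>*(2*A1 + 2*A2 + 2)" using assms(2,3) by (simp add: algebra_simps)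
  hence "(e1 + e2)/(2*\<tau>) \<le> \<delta>*(2*A1 + 2*A2 + 2)/(2*\<tau>)" using assms(11) by (simp add: divide_right_mono)
  thus ?thesis using assms(1) by simp
qed

context sp begin

lemma slope_fin:
  assumes t0: "0 < \<tau>" and sd: "is_saddle (Phi \<phi> \<tau> z) p" and pd: "p \<in> Dom \<phi>"
  shows "slope \<phi> p < \<infinity>"
proof -
  obtain a b where p: "p = (a, b)" by (cases p)
  have a: "a \<in> DX \<phi>" and b: "b \<in> DY \<phi>" using pd p by (auto simp: Dom_def)
  note P = saddle_F[OF sd[unfolded p] a b]
  define K where "K = (2 * dist b (snd z) + 2 * dist a (fst z) + 2)/(2*\<tau>)"
  show ?thesis
  proof (cases "at p within Dom \<phi> = bot")
    case True thus ?thesis using pd by (simp add: slope_def)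
  next
    case False
    have ev: "eventually (\<lambda>z'. max (\<phi> (fst p, snd z') - \<phi> (fst z', snd p)) 0 / ereal (dist z' p) \<le> ereal K)
        (at p within Dom \<phi>)"
      unfolding eventually_at
    proof (intro exI[of _ 1] conjI ballI impI)
      show "(0::real) < 1" by simp
      fix z' assume z': "z' \<in> Dom \<phi>" and h: "z' \<noteq> p \<and> dist z' p < 1"
      obtain x' y' where zz: "z' = (x', y')" by (cases z')
      have x': "x' \<in> DX \<phi>" and y': "y' \<in> DY \<phi>" using z' zz by (auto simp: Dom_def)
      define \<delta> where "\<delta> = dist z' p"
      have dpos: "0 < \<delta>" using h by (simp add: \<delta>_def)
      have d1: "dist y' b \<le> \<delta>" using dist_snd_le[of z' p] by (simp add: \<delta>_def zz p)
      have d2: "dist x' a \<le> \<delta>" using dist_fst_le[of z' p] by (simp add: \<delta>_def zz p)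
      have s1: "FF \<tau> z a y' \<le> FF \<tau> z a b" by (rule P(1)[OF y'])
      have s2: "FF \<tau> z a b \<le> FF \<tau> z x' b" by (rule P(2)[OF x'])
      have u: "pr a y' - pr x' b \<le> (((dist y' (snd z))\<^sup>2 - (dist b (snd z))\<^sup>2) + ((dist x' (fst z))\<^sup>2 - (dist a (fst z))\<^sup>2))/(2*\<tau>)"
        using s1 s2 unfolding FF_def by (simp add: diff_divide_distrib add_divide_distrib)
      have "pr a y' - pr x' b \<le> \<delta> * K" unfolding K_def
        by (rule slope_alg[OF u dist_sq_diff dist_sq_diff zero_le_dist d1 zero_le_dist d2]) (use h dpos t0 in \<open>auto simp: \<delta>_def\<close>)
      moreover have K0: "0 \<le> K" using t0 by (simp add: K_def)
      ultimately have "max (pr a y' - pr x' b) 0 \<le> K * \<delta>" using dpos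
        by (simp add: max_def mult.commute)
      hence kk: "max (pr a y' - pr x' b) 0 / \<delta> \<le> K" using dpos by (simp add: pos_divide_le_eq)
      have e1: "\<phi> (fst p, snd z') - \<phi> (fst z', snd p) = ereal (pr a y' - pr x' b)"
        by (simp add: p zz fin[OF a y'] fin[OF x' b])
      have e2: "max (ereal r) 0 = ereal (max r 0)" for r :: real by (simp add: max_def zero_ereal_def)
      have e3: "ereal c / ereal \<delta> = ereal (c / \<delta>)" for c
        using dpos by simp
      show "max (\<phi> (fst p, snd z') - \<phi> (fst z', snd p)) 0 / ereal (dist z' p) \<le> ereal K"
        unfolding e1 e2 \<delta>_def[symmetric] e3 using kk by simp
    qed
    have "Limsup (at p within Dom \<phi>) (\<lambda>z'. max (\<phi> (fst p, snd z') - \<phi> (fst z', snd p)) 0 / ereal (dist z' p)) \<le> ereal K"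
      by (rule Limsup_bounded[OF ev])
    hence "Limsup (at p within Dom \<phi>) (\<lambda>z'. max (\<phi> (fst p, snd z') - \<phi> (fst z', snd p)) 0 / ereal (dist z' p)) < \<infinity>"
      using le_less_trans by fastforce
    thus ?thesis using pd False by (simp add: slope_def)
  qed
qed

end

context sp begin

lemma conv:
  assumes t0p: "0 < \<tau>0" and ex: "\<And>\<tau> z. \<tau> \<in> adm_tau l \<Longrightarrow> \<tau> < \<tau>0 \<Longrightarrow> \<exists>p. is_saddle (Phi \<phi> \<tau> z) p"
    and zc: "z \<in> closure (Dom \<phi>)"
  shows "((\<lambda>\<tau>. J \<phi> \<tau> z) \<longlongrightarrow> z) (at_right 0)"
proof (rule tendstoI)
  fix e :: real assume e: "0 < e"
  have e2: "0 < e/2" using e by simp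
  obtain p where pD: "p \<in> Dom \<phi>" and pz: "dist p z < e/2"
    using zc e2 unfolding closure_approachable by blast
  obtain a b where pab: "p = (a, b)" by (cases p)
  obtain xb yb where zz: "z = (xb, yb)" by (cases z)
  have a: "a \<in> DX \<phi>" and b: "b \<in> DY \<phi>" using pD pab by (auto simp: Dom_def)
  obtain c1 B1 where B1: "B1 \<ge> 0" and lb: "\<And>x. x \<in> DX \<phi> \<Longrightarrow> c1 - B1 * (dist x a)\<^sup>2 \<le> pr x b"
    by (rule LB[OF b a]) blast
  obtain c2 B2 where B2: "B2 \<ge> 0" and ub: "\<And>y. y \<in> DY \<phi> \<Longrightarrow> pr a y \<le> c2 + B2 * (dist y b)\<^sup>2"
    by (rule UB[OF a b]) blast
  define B where "B = B1 + B2"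
  define C where "C = \<bar>c2 - c1\<bar>"
  define R where "R = (dist a xb)\<^sup>2 + (dist b yb)\<^sup>2"
  have R0: "0 \<le> R" by (simp add: R_def)
  have Rlt: "R < e\<^sup>2/4"
  proof -
    have "sqrt R < e/2" using pz by (simp add: pab zz dist_Pair_Pair R_def)
    hence "(sqrt R)\<^sup>2 < (e/2)\<^sup>2" using R0 by (intro power_strict_mono) auto
    thus ?thesis using R0 by (simp add: power_divide)
  qed
  have C0: "0 \<le> C" by (simp add: C_def)
  have B0: "0 \<le> B" using B1 B2 by (simp add: B_def)
  define \<delta> where "\<delta> = min \<tau>0 (min (1/(\<bar>l\<bar>+1)) (min (1/(8*(B+1))) (e\<^sup>2/(16*(C+1)))))"
  have \<delta>0: "0 < \<delta>" using t0p B0 C0 e by (simp add: \<delta>_def)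
  show "eventually (\<lambda>\<tau>. dist (J \<phi> \<tau> z) z < e) (at_right 0)"
    unfolding eventually_at_right_field
  proof (intro exI[of _ \<delta>] conjI allI impI)
    show "0 < \<delta>" by (rule \<delta>0)
    fix \<tau> :: real assume t0: "0 < \<tau>" and tl: "\<tau> < \<delta>"
    have tau: "\<tau> \<in> adm_tau l" using t0 tl by (intro adm_small) (auto simp: \<delta>_def)
    have "\<tau> < \<tau>0" using tl by (simp add: \<delta>_def)
    note JP = J_props[OF tau ex[of \<tau> z, OF tau this]]
    obtain xt yt where J: "J \<phi> \<tau> z = (xt, yt)" by (cases "J \<phi> \<tau> z")
    have xt: "xt \<in> DX \<phi>" and yt: "yt \<in> DY \<phi>" using JP(2) J by (auto simp: Dom_def)
    note P = saddle_F[OF JP(1)[unfolded J] xt yt]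
    have s: "FF \<tau> z xt b \<le> FF \<tau> z a yt" using P(1)[OF b] P(2)[OF a] by linarith
    define k where "k = 1/(2*\<tau>)"
    define Dt where "Dt = (dist xt xb)\<^sup>2 + (dist yt yb)\<^sup>2"
    have Dt0: "0 \<le> Dt" by (simp add: Dt_def)
    have k1: "Dt * k = (dist xt xb)\<^sup>2/(2*\<tau>) + (dist yt yb)\<^sup>2/(2*\<tau>)" by (simp add: Dt_def k_def add_divide_distrib)
    have k2: "R * k = (dist a xb)\<^sup>2/(2*\<tau>) + (dist b yb)\<^sup>2/(2*\<tau>)" by (simp add: R_def k_def add_divide_distrib)
    have i1: "Dt * k \<le> R * k + (pr a yt - pr xt b)"
      using s unfolding k1 k2 FF_def zz by simp
    have u1: "pr a yt \<le> c2 + B2 * (dist yt b)\<^sup>2" by (rule ub[OF yt])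
    have u2: "B2 * (dist yt b)\<^sup>2 \<le> B * (2 * (dist yt yb)\<^sup>2 + 2 * (dist yb b)\<^sup>2)"
    proof -
      have "B2 * (dist yt b)\<^sup>2 \<le> B2 * (2 * (dist yt yb)\<^sup>2 + 2 * (dist yb b)\<^sup>2)"
        by (rule mult_left_mono[OF dist_sq_tri B2])
      also have "\<dots> \<le> B * (2 * (dist yt yb)\<^sup>2 + 2 * (dist yb b)\<^sup>2)"
        using B1 by (intro mult_right_mono) (auto simp: B_def)
      finally show ?thesis .
    qed
    have l1: "c1 - B1 * (dist xt a)\<^sup>2 \<le> pr xt b" by (rule lb[OF xt])
    have l2: "B1 * (dist xt a)\<^sup>2 \<le> B * (2 * (dist xt xb)\<^sup>2 + 2 * (dist xb a)\<^sup>2)"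
    proof -
      have "B1 * (dist xt a)\<^sup>2 \<le> B1 * (2 * (dist xt xb)\<^sup>2 + 2 * (dist xb a)\<^sup>2)"
        by (rule mult_left_mono[OF dist_sq_tri B1])
      also have "\<dots> \<le> B * (2 * (dist xt xb)\<^sup>2 + 2 * (dist xb a)\<^sup>2)"
        using B2 by (intro mult_right_mono) (auto simp: B_def)
      finally show ?thesis .
    qed
    have eqs: "B * (2 * (dist yt yb)\<^sup>2 + 2 * (dist yb b)\<^sup>2) + B * (2 * (dist xt xb)\<^sup>2 + 2 * (dist xb a)\<^sup>2)
       = 2*B*Dt + 2*B*R" by (simp add: Dt_def R_def dist_commute algebra_simps)
    have cc: "c2 - c1 \<le> C" by (simp add: C_def)
    have i2: "pr a yt - pr xt b \<le> C + 2*B*Dt + 2*B*R" using u1 u2 l1 l2 eqs cc by linarith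
    have tb: "\<tau> \<le> 1/(8*(B+1))" using tl by (simp add: \<delta>_def)
    have k4: "4*(B+1) \<le> k" using tb t0 B0 by (simp add: k_def field_simps)
    have "Dt \<le> 3*R + 2*C/k" by (rule conv_alg[OF i1 i2 k4 B0 Dt0 R0 C0])
    also have "2*C/k = 4*\<tau>*C" using t0 by (simp add: k_def)
    finally have D1: "Dt \<le> 3*R + 4*\<tau>*C" .
    have "\<tau> < e\<^sup>2/(16*(C+1))" using tl by (simp add: \<delta>_def)
    hence "\<tau>*(16*(C+1)) < e\<^sup>2" using C0 by (simp add: field_simps)
    moreover have "4*\<tau>*C \<le> 4*\<tau>*(C+1)" using t0 by simp
    ultimately have "4*\<tau>*C < e\<^sup>2/4" by (simp add: algebra_simps)
    hence "Dt < e\<^sup>2" using D1 Rlt by linarith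
    hence "sqrt Dt < sqrt (e\<^sup>2)" by (rule real_sqrt_less_mono)
    hence "sqrt Dt < e" using e by simp
    thus "dist (J \<phi> \<tau> z) z < e" unfolding J unfolding zz by (simp add: dist_Pair_Pair Dt_def)
  qed
qed

end

theorem mainTheorem13:
  fixes \<phi> :: "'a::complete_space \<times> 'b::complete_space \<Rightarrow> ereal" and l :: real
  assumes "proper_sp \<phi>" and "closed_sp \<phi>" and "A1 \<phi>" and "A2 \<phi> l"
  shows "(\<forall>z\<in>closure (Dom \<phi>). ((\<lambda>\<tau>. J \<phi> \<tau> z) \<longlongrightarrow> z) (at_right 0))
         \<and> closure (Dom \<phi>) = closure (Dom_slope \<phi>)"
proof -
  interpret sp \<phi> l using assms by unfold_locales
  obtain \<tau>0 where t0p: "0 < \<tau>0" and ex: "\<And>\<tau> z. \<tau> \<in> adm_tau l \<Longrightarrow> \<tau> < \<tau>0 \<Longrightarrow> \<exists>p. is_saddle (Phi \<phi> \<tau> z) p"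
    by (rule exist_saddle) blast
  have C: "\<forall>z\<in>closure (Dom \<phi>). ((\<lambda>\<tau>. J \<phi> \<tau> z) \<longlongrightarrow> z) (at_right 0)"
    using conv[OF t0p ex] by blast
  have sub: "Dom \<phi> \<subseteq> closure (Dom_slope \<phi>)"
  proof
    fix z assume zD: "z \<in> Dom \<phi>"
    hence lim: "((\<lambda>\<tau>. J \<phi> \<tau> z) \<longlongrightarrow> z) (at_right 0)" using C closure_subset by blast
    show "z \<in> closure (Dom_slope \<phi>)" unfolding closure_approachable
    proof (intro allI impI)
      fix e :: real assume e: "0 < e"
      have "eventually (\<lambda>\<tau>. dist (J \<phi> \<tau> z) z < e) (at_right 0)" using tendstoD[OF lim e] .
      then obtain b where b: "0 < b" "\<And>\<tau>. 0 < \<tau> \<Longrightarrow> \<tau> < b \<Longrightarrow> dist (J \<phi> \<tau> z) z < e"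
        unfolding eventually_at_right_field by auto
      define \<tau> where "\<tau> = min b (min \<tau>0 (1/(\<bar>l\<bar>+1))) / 2"
      have t0: "0 < \<tau>" using b t0p by (simp add: \<tau>_def)
      define mm where "mm = min b (min \<tau>0 (1/(\<bar>l\<bar>+1)))"
      have mm: "0 < mm" "mm \<le> b" "mm \<le> \<tau>0" "mm \<le> 1/(\<bar>l\<bar>+1)" using b t0p by (auto simp: mm_def)
      have tm: "\<tau> = mm/2" by (simp add: \<tau>_def mm_def)
      have tb: "\<tau> < b" "\<tau> < \<tau>0" "\<tau> < 1/(\<bar>l\<bar>+1)" using mm unfolding tm by linarith+
      have tau: "\<tau> \<in> adm_tau l" using adm_small[OF t0 tb(3)] .
      note JP = J_props[OF tau ex[of \<tau> z, OF tau tb(2)]]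
      have "J \<phi> \<tau> z \<in> Dom_slope \<phi>"
        using JP slope_fin[OF t0 JP(1) JP(2)] by (simp add: Dom_slope_def)
      moreover have "dist (J \<phi> \<tau> z) z < e" using b(2)[OF t0 tb(1)] .
      ultimately show "\<exists>y\<in>Dom_slope \<phi>. dist y z < e" by blast
    qed
  qed
  have "closure (Dom \<phi>) \<subseteq> closure (Dom_slope \<phi>)" by (rule closure_minimal[OF sub closed_closure])
  moreover have "closure (Dom_slope \<phi>) \<subseteq> closure (Dom \<phi>)"
    by (rule closure_mono) (auto simp: Dom_slope_def)
  ultimately show ?thesis using C by blast
qed

end
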